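(* Let $K\subseteq\mathbb{R}^d$ be a convex body, $\varepsilon>0$ and $i\in I^\pm$. For every $t>0$ there exists a set $P_i$ of $O(1/t)$ augmented points of $\overline{\partial}K_i^*$ that stabs every useful $t$-large $\varepsilon$-cap of $K_i^*$. The constant in $O$ depends only on $d$.
   Context: For a unit vector $u$, $H^+(u)$ is the closed supporting halfspace of $K$ with outer normal $u$. Let $e_1,\dots,e_d$ be the coordinate unit vectors, $e_{-j}=-e_j$, $I^\pm=\{\pm1,\dots,\pm d\}$, $V_i=\{u\in\mathbb{S}^{d-1}:\langle u,e_i\rangle\ge\langle u,e_j\rangle\ \forall j\in I^\pm,j\ne i\}$, $S_i=\bigcap_{u\in V_i}H^+(u)$. Fix $i$ and use orthonormal coordinates $(x_1,\dots,x_{d-1},y)$ in which $e_i$ is the upward $y$-direction and the $x$-coordinates are the remaining original coordinates (up to sign); $S^\downarrow$ is orthogonal projection onto $\{y=0\}\cong\mathbb{R}^{d-1}$ and $\mathrm{area}$ of subsets there is $(d-1)$-dimensional measure; $S\pm\varepsilon$ is vertical translation. $K^\downarrow\oplus\alpha$ is the set of points of $\{y=0\}$ within distance $\alpha$ of $K^\downarrow$; $K_i^{(\alpha)}=\{x\in S_i:x^\downarrow\in K^\downarrow\oplus\alpha\}$, $K_i=K_i^{(2\varepsilon)}$. For a closed convex set $U$ in which every upward vertical ray from a boundary point lies in $U$ (U-shaped), $\overline{\partial}U$ is the set of boundary points with a non-vertical supporting hyperplane, each augmented by a choice $h(q)$ of such a hyperplane. The projective dual of a point $p$ is the hyperplane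 $p^*:y=\sum_{j=1}^{d-1}p_jx_j-p_d$ (with $p^{**}=p$); $K_i^*$ is the intersection of the closed upper halfspaces of $q^*$ for $q\in\overline{\partial}K_i$. The augmented point $q\in\overline{\partial}K_i$ with hyperplane $h(q)$ corresponds to $h(q)^*\in\overline{\partial}K_i^*$ with supporting hyperplane $q^*$. The $\varepsilon$-cap $\mathrm{Cap}_\varepsilon(p)(K_i^* )$ is the set of augmented points of $\overline{\partial}K_i^*$ in the closed lower halfspace of $h(p)+\varepsilon$; its base is $\mathrm{CBase}_\varepsilon(p)=(h(p)+\varepsilon)\cap K_i^*$. The cap is useful if $p$ corresponds to a point $q\in\overline{\partial}K_i$ lying on the lower boundary of $K_i^{(\varepsilon)}$, and $t$-large if $\mathrm{area}(\mathrm{CBase}_\varepsilon(p)^\downarrow)\ge t$. A set stabs a collection of caps if each cap contains at least one of its points. *)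

theory Defs
  imports "HOL-Analysis.Analysis"
begin

text \<open>Ambient space: real^'n, d = CARD('n). Signed indices I^pm are pairs (j, b):
  (j, True) stands for +j, (j, False) for -j.\<close>

definition sunit :: "'n::finite \<times> bool \<Rightarrow> real^'n" where
  "sunit i = (if snd i then 1 else -1) *\<^sub>R axis (fst i) 1"

definition Vdir :: "'n::finite \<times> bool \<Rightarrow> (real^'n) set" where
  "Vdir i = {u. norm u = 1 \<and> (\<forall>k. k \<noteq> i \<longrightarrow> u \<bullet> sunit k \<le> u \<bullet> sunit i)}"

definition supp_fun :: "(real^'n::finite) set \<Rightarrow> real^'n \<Rightarrow> real" where
  "supp_fun K u = Sup ((\<lambda>k. k \<bullet> u) ` K)"

definition Hplus :: "(real^'n::finite) set \<Rightarrow> real^'n \<Rightarrow> (real^'n) set" where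
  "Hplus K u = {x. x \<bullet> u \<le> supp_fun K u}"

definition Sset :: "(real^'n::finite) set \<Rightarrow> 'n \<times> bool \<Rightarrow> (real^'n) set" where
  "Sset K i = (\<Inter>u\<in>Vdir i. Hplus K u)"

text \<open>Upward vertical direction of the coordinate system attached to i,
  height y and projection onto the hyperplane {y = 0} (points of real^'n with zero
  (fst i)-th coordinate).\<close>
definition upv :: "'n::finite \<times> bool \<Rightarrow> real^'n" where
  "upv i = - sunit i"

definition hgt :: "'n::finite \<times> bool \<Rightarrow> real^'n \<Rightarrow> real" where
  "hgt i z = z \<bullet> upv i"

definition hor :: "'n::finite \<times> bool \<Rightarrow> real^'n \<Rightarrow> real^'n" where
  "hor i z = z - (z $ fst i) *\<^sub>R axis (fst i) 1"

text \<open>(d-1)-dimensional Lebesgue measure on the hyperplane {y = 0}.\<close>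
definition area :: "'n::finite \<times> bool \<Rightarrow> (real^'n) set \<Rightarrow> ennreal" where
  "area i A = emeasure (completion (PiM (- {fst i}) (\<lambda>_. lborel)))
                ((\<lambda>z. restrict (\<lambda>k. z $ k) (- {fst i})) ` A)"

text \<open>Projective dual hyperplane p^*: y = sum_j p_j x_j - p_d.\<close>
definition dualh :: "'n::finite \<times> bool \<Rightarrow> real^'n \<Rightarrow> (real^'n) set" where
  "dualh i p = {z. hgt i z = hor i p \<bullet> hor i z - hgt i p}"

definition uhalf :: "'n::finite \<times> bool \<Rightarrow> real^'n \<Rightarrow> (real^'n) set" where
  "uhalf i p = {z. hor i p \<bullet> hor i z - hgt i p \<le> hgt i z}"

text \<open>Dual point of a non-vertical hyperplane H (so that H = (dualpt i H)^*).\<close>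
definition dualpt :: "'n::finite \<times> bool \<Rightarrow> (real^'n) set \<Rightarrow> real^'n" where
  "dualpt i H = (THE p. H = dualh i p)"

definition nbhd :: "(real^'n::finite) set \<Rightarrow> 'n \<times> bool \<Rightarrow> real \<Rightarrow> (real^'n) set" where
  "nbhd K i \<alpha> = {w. w $ fst i = 0 \<and> (\<exists>k\<in>K. dist w (hor i k) \<le> \<alpha>)}"

definition Kal :: "(real^'n::finite) set \<Rightarrow> 'n \<times> bool \<Rightarrow> real \<Rightarrow> (real^'n) set" where
  "Kal K i \<alpha> = {z \<in> Sset K i. hor i z \<in> nbhd K i \<alpha>}"

definition Kmain :: "(real^'n::finite) set \<Rightarrow> 'n \<times> bool \<Rightarrow> real \<Rightarrow> (real^'n) set" where
  "Kmain K i \<epsilon> = Kal K i (2 * \<epsilon>)"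

definition supports :: "(real^'n::finite) set \<Rightarrow> real^'n \<Rightarrow> (real^'n) set \<Rightarrow> bool" where
  "supports U q H \<longleftrightarrow> q \<in> U \<and> q \<in> H \<and>
     (\<exists>a b. a \<noteq> 0 \<and> H = {x. a \<bullet> x = b} \<and> (\<forall>u\<in>U. a \<bullet> u \<le> b))"

text \<open>Augmented boundary: boundary points paired with a non-vertical supporting hyperplane.\<close>
definition ovbd :: "'n::finite \<times> bool \<Rightarrow> (real^'n) set \<Rightarrow> ((real^'n) \<times> (real^'n) set) set" where
  "ovbd i U = {(q, H). q \<in> frontier U \<and> (\<exists>p. H = dualh i p) \<and> supports U q H}"

definition Kdual :: "(real^'n::finite) set \<Rightarrow> 'n \<times> bool \<Rightarrow> real \<Rightarrow> (real^'n) set" where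
  "Kdual K i \<epsilon> = (\<Inter>qH\<in>ovbd i (Kmain K i \<epsilon>). uhalf i (fst qH))"

definition vshift :: "'n::finite \<times> bool \<Rightarrow> real \<Rightarrow> (real^'n) set \<Rightarrow> (real^'n) set" where
  "vshift i e S = (\<lambda>z. z + e *\<^sub>R upv i) ` S"

definition lowerhalf :: "'n::finite \<times> bool \<Rightarrow> (real^'n) set \<Rightarrow> (real^'n) set" where
  "lowerhalf i H = {z. \<exists>w\<in>H. hor i w = hor i z \<and> hgt i z \<le> hgt i w}"

definition lowbd :: "'n::finite \<times> bool \<Rightarrow> (real^'n) set \<Rightarrow> (real^'n) set" where
  "lowbd i A = {z \<in> A. \<forall>s>0. z - s *\<^sub>R upv i \<notin> A}"

definition Cap :: "'n::finite \<times> bool \<Rightarrow> (real^'n) set \<Rightarrow> real \<Rightarrow> (real^'n) \<times> (real^'n) set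
                    \<Rightarrow> ((real^'n) \<times> (real^'n) set) set" where
  "Cap i U e pH = {rG \<in> ovbd i U. fst rG \<in> lowerhalf i (vshift i e (snd pH))}"

definition CBase :: "'n::finite \<times> bool \<Rightarrow> (real^'n) set \<Rightarrow> real \<Rightarrow> (real^'n) \<times> (real^'n) set
                    \<Rightarrow> (real^'n) set" where
  "CBase i U e pH = vshift i e (snd pH) \<inter> U"

definition useful :: "(real^'n::finite) set \<Rightarrow> 'n \<times> bool \<Rightarrow> real \<Rightarrow> (real^'n) \<times> (real^'n) set \<Rightarrow> bool" where
  "useful K i \<epsilon> pH \<longleftrightarrow> (\<exists>(q, G)\<in>ovbd i (Kmain K i \<epsilon>).
      fst pH = dualpt i G \<and> snd pH = dualh i q \<and> q \<in> lowbd i (Kal K i \<epsilon>))"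

definition large :: "(real^'n::finite) set \<Rightarrow> 'n \<times> bool \<Rightarrow> real \<Rightarrow> real \<Rightarrow> (real^'n) \<times> (real^'n) set \<Rightarrow> bool" where
  "large K i \<epsilon> t pH \<longleftrightarrow> ennreal t \<le> area i (hor i ` CBase i (Kdual K i \<epsilon>) \<epsilon> pH)"

end

theory Submission
  imports Defs
begin


lemma upv_eq: "upv i = (if snd i then -1 else 1) *\<^sub>R axis (fst i) 1"
  by (simp add: upv_def sunit_def)

lemma upv_comp: "upv i $ k = (if k = fst i then (if snd i then -1 else 1) else 0)"
  by (simp add: upv_eq axis_def)

lemma hor_comp: "hor i z $ k = (if k = fst i then 0 else z $ k)"
  by (simp add: hor_def axis_def)

lemma hgt_eq: "hgt i z = (if snd i then - (z $ fst i) else z $ fst i)"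
  by (simp add: hgt_def upv_eq inner_axis)

lemma hgt_upv[simp]: "hgt i (upv i) = 1"
  by (simp add: hgt_eq upv_comp)

lemma hor_upv[simp]: "hor i (upv i) = 0"
  by (simp add: vec_eq_iff hor_comp upv_comp)

lemma hgt_hor[simp]: "hgt i (hor i z) = 0"
  by (simp add: hgt_eq hor_comp)

lemma hor_hor[simp]: "hor i (hor i z) = hor i z"
  by (simp add: vec_eq_iff hor_comp)

lemma hor_W: "z $ fst i = 0 \<Longrightarrow> hor i z = z"
  by (simp add: vec_eq_iff hor_comp)

lemma hor_fst[simp]: "hor i z $ fst i = 0"
  by (simp add: hor_comp)

lemma hor_add[simp]: "hor i (x + y) = hor i x + hor i y"
  by (simp add: vec_eq_iff hor_comp)
lemma hor_diff[simp]: "hor i (x - y) = hor i x - hor i y"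
  by (simp add: vec_eq_iff hor_comp)
lemma hor_scale[simp]: "hor i (c *\<^sub>R x) = c *\<^sub>R hor i x"
  by (simp add: vec_eq_iff hor_comp)
lemma hor_neg[simp]: "hor i (- x) = - hor i x"
  by (simp add: vec_eq_iff hor_comp)
lemma hor_zero[simp]: "hor i 0 = 0"
  by (simp add: vec_eq_iff hor_comp)
lemma hgt_add[simp]: "hgt i (x + y) = hgt i x + hgt i y"
  by (simp add: hgt_def inner_add_left)
lemma hgt_diff[simp]: "hgt i (x - y) = hgt i x - hgt i y"
  by (simp add: hgt_def inner_diff_left)
lemma hgt_scale[simp]: "hgt i (c *\<^sub>R x) = c * hgt i x"
  by (simp add: hgt_def)
lemma hgt_neg[simp]: "hgt i (- x) = - hgt i x"
  by (simp add: hgt_def)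
lemma hgt_zero[simp]: "hgt i 0 = 0"
  by (simp add: hgt_def)

lemma decomp: "hor i z + hgt i z *\<^sub>R upv i = z"
  by (simp add: vec_eq_iff hor_comp hgt_eq upv_comp)

lemma hgt_hor_inner: "hor i z \<bullet> upv i = 0"
  using hgt_hor[of i z] by (simp add: hgt_def)

lemma inner_decomp: "a \<bullet> z = hor i a \<bullet> hor i z + hgt i a * hgt i z"
proof -
  have "a \<bullet> z = (hor i a + hgt i a *\<^sub>R upv i) \<bullet> (hor i z + hgt i z *\<^sub>R upv i)"
    by (simp add: decomp)
  also have "\<dots> = hor i a \<bullet> hor i z + hgt i a * hgt i z"
    by (simp add: inner_add_left inner_add_right inner_commute[of "upv i"] flip: hgt_def)
  finally show ?thesis .
qed

lemma hor_point[simp]: "hor i (hor i s + y *\<^sub>R upv i) = hor i s"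
  by simp
lemma hgt_point[simp]: "hgt i (hor i s + y *\<^sub>R upv i) = y"
  by simp

lemma inner_sunit: "v \<bullet> sunit k = (if snd k then v $ fst k else - (v $ fst k))"
  by (simp add: sunit_def inner_axis)

lemma norm_sunit: "norm (sunit k) = 1"
  by (simp add: sunit_def)

lemma sunit_in_Vdir: "sunit i \<in> Vdir i"
proof -
  have "sunit i \<bullet> sunit k \<le> 1" for k
    by (simp add: inner_sunit sunit_def axis_nth inner_axis_axis)
  moreover have "sunit i \<bullet> sunit i = 1"
    by (simp add: inner_sunit sunit_def axis_nth inner_axis_axis)
  ultimately show ?thesis by (simp add: Vdir_def norm_sunit)
qed

lemma Sset_hgt_lb: "z \<in> Sset K i \<Longrightarrow> hgt i z \<ge> - supp_fun K (sunit i)"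
  using sunit_in_Vdir[of i]
  by (auto simp: Sset_def Hplus_def hgt_def upv_def)

lemma Vdir_comp:
  assumes "v \<in> Vdir i" "k \<noteq> fst i"
  shows "\<bar>v $ k\<bar> \<le> v \<bullet> sunit i"
proof -
  have "v \<bullet> sunit (k, True) \<le> v \<bullet> sunit i" "v \<bullet> sunit (k, False) \<le> v \<bullet> sunit i"
    using assms by (auto simp: Vdir_def)
  then show ?thesis by (simp add: inner_sunit)
qed

lemma Vdir_nonneg:
  assumes "v \<in> Vdir i"
  shows "0 \<le> v \<bullet> sunit i"
proof -
  have "v \<bullet> sunit (fst i, \<not> snd i) \<le> v \<bullet> sunit i"
    using assms by (cases i) (auto simp: Vdir_def)
  then show ?thesis by (cases i) (auto simp: inner_sunit)
qed

lemma Sset_up: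
  assumes z: "z \<in> Sset K i" and h: "h $ fst i = 0" and c: "c \<ge> (\<Sum>k\<in>UNIV. \<bar>h $ k\<bar>)"
  shows "z + h + c *\<^sub>R upv i \<in> Sset K i"
  unfolding Sset_def Hplus_def
proof (intro InterI, clarsimp)
  fix v assume v: "v \<in> Vdir i"
  define m where "m = v \<bullet> sunit i"
  have m0: "0 \<le> m" using Vdir_nonneg[OF v] by (simp add: m_def)
  have "h \<bullet> v = (\<Sum>k\<in>UNIV. h $ k * v $ k)" by (simp add: inner_vec_def)
  also have "\<dots> \<le> (\<Sum>k\<in>UNIV. \<bar>h $ k\<bar> * m)"
  proof (rule sum_mono)
    fix k
    show "h $ k * v $ k \<le> \<bar>h $ k\<bar> * m"
    proof (cases "k = fst i")
      case True then show ?thesis using h m0 by simp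
    next
      case False
      then have "\<bar>v $ k\<bar> \<le> m" using Vdir_comp[OF v] by (simp add: m_def)
      then have "\<bar>h $ k * v $ k\<bar> \<le> \<bar>h $ k\<bar> * m"
        by (simp add: abs_mult mult_left_mono)
      then show ?thesis by linarith
    qed
  qed
  also have "\<dots> = (\<Sum>k\<in>UNIV. \<bar>h $ k\<bar>) * m" by (simp add: sum_distrib_right)
  also have "\<dots> \<le> c * m" using c m0 by (simp add: mult_right_mono)
  finally have hv: "h \<bullet> v \<le> c * m" .
  have uv: "upv i \<bullet> v = - m" by (simp add: upv_def m_def inner_commute)
  have "z \<bullet> v \<le> supp_fun K v" using z v by (auto simp: Sset_def Hplus_def)
  then show "(z + h + c *\<^sub>R upv i) \<bullet> v \<le> supp_fun K v"
    using hv uv by (simp add: inner_add_left)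
qed

lemma closed_hs: "closed {x. x \<bullet> v \<le> (c::real)}"
  using closed_halfspace_le[of v c] by (simp add: inner_commute)
lemma convex_hs: "convex {x. x \<bullet> v \<le> (c::real)}"
  using convex_halfspace_le[of v c] by (simp add: inner_commute)

lemma closed_Sset: "closed (Sset K i)"
  unfolding Sset_def Hplus_def
  by (intro closed_INT ballI) (rule closed_hs)

lemma convex_Sset: "convex (Sset K i)"
  unfolding Sset_def Hplus_def
  by (intro convex_INT ballI) (rule convex_hs)


lemma nbhd_mono: "\<alpha> \<le> \<beta> \<Longrightarrow> nbhd K i \<alpha> \<subseteq> nbhd K i \<beta>"
  by (force simp: nbhd_def)

lemma nbhd_add:
  assumes "w \<in> nbhd K i \<alpha>" "h $ fst i = 0" "norm h \<le> \<beta>"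
  shows "w + h \<in> nbhd K i (\<alpha> + \<beta>)"
proof -
  obtain k where k: "k \<in> K" "dist w (hor i k) \<le> \<alpha>" and w: "w $ fst i = 0"
    using assms(1) by (auto simp: nbhd_def)
  have "dist (w + h) (hor i k) \<le> dist w (hor i k) + norm h"
    by (simp add: dist_norm) (metis add.commute add_diff_eq diff_add_eq norm_triangle_ineq)
  then have "dist (w + h) (hor i k) \<le> \<alpha> + \<beta>" using k assms(3) by linarith
  then show ?thesis using k w assms(2) by (auto simp: nbhd_def)
qed

lemma isCont_hor[continuous_intros]: "isCont (hor i) z"
  unfolding hor_def by (intro continuous_intros)

lemma continuous_on_hor[continuous_intros]: "continuous_on S (hor i)"
  unfolding hor_def by (intro continuous_intros)

lemma closed_nbhd:
  assumes "compact K"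
  shows "closed (nbhd K i \<alpha>)"
proof -
  have c: "compact {x + y | x y. x \<in> hor i ` K \<and> y \<in> cball 0 \<alpha>}"
    using compact_sums[OF compact_continuous_image[OF continuous_on_hor assms] compact_cball] by blast
  have "{w. \<exists>k\<in>K. dist w (hor i k) \<le> \<alpha>} = {x + y | x y. x \<in> hor i ` K \<and> y \<in> cball 0 \<alpha>}"
  proof (intro set_eqI iffI)
    fix w assume "w \<in> {w. \<exists>k\<in>K. dist w (hor i k) \<le> \<alpha>}"
    then obtain k where "k \<in> K" "dist w (hor i k) \<le> \<alpha>" by auto
    then show "w \<in> {x + y | x y. x \<in> hor i ` K \<and> y \<in> cball 0 \<alpha>}"
    proof -
      have "w - hor i k \<in> cball 0 \<alpha>" "hor i k \<in> hor i ` K" "w = hor i k + (w - hor i k)"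
        using \<open>k \<in> K\<close> \<open>dist w (hor i k) \<le> \<alpha>\<close> norm_minus_commute[of "hor i k" w] by (auto simp: dist_norm)
      then show ?thesis by blast
    qed
  next
    fix w assume "w \<in> {x + y | x y. x \<in> hor i ` K \<and> y \<in> cball 0 \<alpha>}"
    then obtain x y where "w = x + y" "x \<in> hor i ` K" "y \<in> cball 0 \<alpha>" by blast
    then obtain k where "k \<in> K" "w = hor i k + y" "norm y \<le> \<alpha>" by auto
    then show "w \<in> {w. \<exists>k\<in>K. dist w (hor i k) \<le> \<alpha>}"
      by (intro CollectI bexI[of _ k]) (auto simp: dist_norm)
  qed
  then have "closed {w. \<exists>k\<in>K. dist w (hor i k) \<le> \<alpha>}"
    using compact_imp_closed[OF c] by simp
  moreover have "closed {w::real^'a. w $ fst i = 0}"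
  proof -
    have "{w::real^'a. w $ fst i = 0} = {w. axis (fst i) 1 \<bullet> w = 0}"
      by (simp add: inner_axis')
    then show ?thesis using closed_hyperplane[of "axis (fst i) 1" 0] by simp
  qed
  ultimately have "closed ({w::real^'a. w $ fst i = 0} \<inter> {w. \<exists>k\<in>K. dist w (hor i k) \<le> \<alpha>})"
    by (simp add: closed_Int)
  moreover have "nbhd K i \<alpha> = {w::real^'a. w $ fst i = 0} \<inter> {w. \<exists>k\<in>K. dist w (hor i k) \<le> \<alpha>}"
    by (auto simp: nbhd_def)
  ultimately show ?thesis by simp
qed


lemma convex_nbhd:
  assumes "convex K"
  shows "convex (nbhd K i \<alpha>)"
  unfolding convex_def
proof (intro ballI allI impI)
  fix x y and u v :: real
  assume x: "x \<in> nbhd K i \<alpha>" and y: "y \<in> nbhd K i \<alpha>" and uv: "0 \<le> u" "0 \<le> v" "u + v = 1"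
  obtain k1 where k1: "k1 \<in> K" "dist x (hor i k1) \<le> \<alpha>" "x $ fst i = 0" using x by (auto simp: nbhd_def)
  obtain k2 where k2: "k2 \<in> K" "dist y (hor i k2) \<le> \<alpha>" "y $ fst i = 0" using y by (auto simp: nbhd_def)
  have k: "u *\<^sub>R k1 + v *\<^sub>R k2 \<in> K" using assms k1 k2 uv by (auto simp: convex_def)
  have "dist (u *\<^sub>R x + v *\<^sub>R y) (hor i (u *\<^sub>R k1 + v *\<^sub>R k2))
      = norm (u *\<^sub>R (x - hor i k1) + v *\<^sub>R (y - hor i k2))"
    by (simp add: dist_norm algebra_simps)
  also have "\<dots> \<le> norm (u *\<^sub>R (x - hor i k1)) + norm (v *\<^sub>R (y - hor i k2))"
    by (rule norm_triangle_ineq)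
  also have "\<dots> = u * norm (x - hor i k1) + v * norm (y - hor i k2)"
    using uv by simp
  also have "\<dots> \<le> u * \<alpha> + v * \<alpha>"
    using uv k1 k2 by (intro add_mono mult_left_mono) (auto simp: dist_norm)
  also have "\<dots> = \<alpha>" using uv by (metis distrib_right mult_1)
  finally have d: "dist (u *\<^sub>R x + v *\<^sub>R y) (hor i (u *\<^sub>R k1 + v *\<^sub>R k2)) \<le> \<alpha>" .
  have "(u *\<^sub>R x + v *\<^sub>R y) $ fst i = 0" using k1 k2 by simp
  then show "u *\<^sub>R x + v *\<^sub>R y \<in> nbhd K i \<alpha>"
    using k d unfolding nbhd_def by blast
qed

lemma Kal_eq: "Kal K i \<alpha> = Sset K i \<inter> hor i -` nbhd K i \<alpha>"
  by (auto simp: Kal_def)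

lemma closed_Kal: "compact K \<Longrightarrow> closed (Kal K i \<alpha>)"
  unfolding Kal_eq
  by (intro closed_Int closed_Sset continuous_closed_vimage closed_nbhd isCont_hor)

lemma linear_hor: "linear (hor i)"
  by (auto simp: linear_iff)

lemma convex_Kal: "convex K \<Longrightarrow> convex (Kal K i \<alpha>)"
  unfolding Kal_eq
  by (intro convex_Int convex_Sset convex_linear_vimage convex_nbhd linear_hor)

lemma dualh_repr:
  assumes "a \<bullet> upv i \<noteq> 0"
  shows "{x. a \<bullet> x = \<beta>} = dualh i (- (1 / (a \<bullet> upv i)) *\<^sub>R hor i a - (\<beta> / (a \<bullet> upv i)) *\<^sub>R upv i)"
proof -
  define \<kappa> where "\<kappa> = a \<bullet> upv i"
  have k: "\<kappa> \<noteq> 0" using assms by (simp add: \<kappa>_def)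
  have ha: "hgt i a = \<kappa>" by (simp add: hgt_def \<kappa>_def)
  have "a \<bullet> x = \<beta> \<longleftrightarrow> hgt i x = - (1 / \<kappa>) * (hor i a \<bullet> hor i x) + \<beta> / \<kappa>" for x
  proof -
    have "a \<bullet> x = hor i a \<bullet> hor i x + \<kappa> * hgt i x" using inner_decomp[of a x i] ha by simp
    then show ?thesis using k by (auto simp: field_simps)
  qed
  then show ?thesis
    by (auto simp: dualh_def \<kappa>_def[symmetric] inner_commute)
qed

lemma not_interior_low:
  assumes "\<forall>s>0. w - s *\<^sub>R upv i \<notin> U"
  shows "w \<notin> interior U"
proof
  assume "w \<in> interior U"
  then obtain e where e: "e > 0" "ball w e \<subseteq> U" by (meson mem_interior)
  have nu: "norm (upv i) = 1" by (simp add: upv_def norm_sunit)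
  have "w - (e/2) *\<^sub>R upv i \<in> ball w e" using e nu by (simp add: dist_norm)
  then show False using e assms by (meson half_gt_zero subsetD)
qed

lemma ovbd_lowest:
  fixes U :: "(real^'n) set"
  assumes U: "convex U" and w: "w \<in> U" "w + upv i \<in> U" and low: "\<forall>s>0. w - s *\<^sub>R upv i \<notin> U"
    and nv: "\<And>a. a \<noteq> 0 \<Longrightarrow> a \<bullet> upv i = 0 \<Longrightarrow> \<exists>y\<in>U. a \<bullet> y < a \<bullet> w"
  shows "\<exists>H. (w, H) \<in> ovbd i U"
proof -
  have "w \<notin> rel_interior U"
  proof
    assume "w \<in> rel_interior U"
    then obtain e where "e > 1" "(1 - e) *\<^sub>R (w + upv i) + e *\<^sub>R w \<in> U"
      using convex_rel_interior_iff[OF U, of w] w by blast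
    moreover have "(1 - e) *\<^sub>R (w + upv i) + e *\<^sub>R w = w - (e - 1) *\<^sub>R upv i"
      by (simp add: algebra_simps)
    ultimately show False using low by auto
  qed
  then obtain a where a: "a \<noteq> 0" "\<And>y. y \<in> U \<Longrightarrow> a \<bullet> w \<le> a \<bullet> y"
    using supporting_hyperplane_rel_boundary[OF U w(1)] by metis
  have au: "a \<bullet> upv i \<noteq> 0"
  proof
    assume "a \<bullet> upv i = 0"
    then obtain y where "y \<in> U" "a \<bullet> y < a \<bullet> w" using nv a(1) by blast
    then show False using a(2) by fastforce
  qed
  define H where "H = {x. (- a) \<bullet> x = - (a \<bullet> w)}"
  have H1: "H = {x. a \<bullet> x = a \<bullet> w}" by (auto simp: H_def)
  have "\<exists>p. H = dualh i p" using dualh_repr[OF au] H1 by blast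
  moreover have "supports U w H"
    unfolding supports_def
  proof (intro conjI exI[of _ "- a"] exI[of _ "- (a \<bullet> w)"])
    show "w \<in> U" by fact
    show "w \<in> H" by (simp add: H1)
    show "- a \<noteq> 0" using a by simp
    show "H = {x. - a \<bullet> x = - (a \<bullet> w)}" by (simp add: H_def)
    show "\<forall>u\<in>U. - a \<bullet> u \<le> - (a \<bullet> w)" using a(2) by simp
  qed
  moreover have "w \<in> frontier U"
    using not_interior_low[OF low] w(1) closure_subset by (auto simp: frontier_def)
  ultimately show ?thesis by (auto simp: ovbd_def)
qed

lemma lowest_exists:
  fixes U :: "(real^'n) set"
  assumes U: "closed U" and x: "x \<in> U" and B: "\<And>\<tau>. \<tau> \<ge> 0 \<Longrightarrow> x - \<tau> *\<^sub>R upv i \<in> U \<Longrightarrow> \<tau> \<le> B"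
  shows "\<exists>\<tau>\<ge>0. x - \<tau> *\<^sub>R upv i \<in> U \<and> (\<forall>s>0. x - (\<tau> + s) *\<^sub>R upv i \<notin> U)"
proof -
  define S where "S = {\<tau>::real. \<tau> \<ge> 0 \<and> x - \<tau> *\<^sub>R upv i \<in> U}"
  have "S = {0..} \<inter> (\<lambda>\<tau>. x - \<tau> *\<^sub>R upv i) -` U" by (auto simp: S_def)
  moreover have "closed ((\<lambda>\<tau>::real. x - \<tau> *\<^sub>R upv i) -` U)"
    by (intro continuous_closed_vimage U continuous_intros)
  ultimately have cS: "closed S" by (simp add: closed_Int)
  have ne: "S \<noteq> {}" using x by (auto simp: S_def intro!: exI[of _ 0])
  have bdd: "bdd_above S" using B by (auto simp: S_def bdd_above_def)
  have "Sup S \<in> S" by (rule closed_contains_Sup[OF ne bdd cS])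
  moreover have "x - (Sup S + s) *\<^sub>R upv i \<notin> U" if "s > 0" for s
  proof
    assume "x - (Sup S + s) *\<^sub>R upv i \<in> U"
    moreover have "Sup S \<ge> 0" using \<open>Sup S \<in> S\<close> by (simp add: S_def)
    ultimately have "Sup S + s \<in> S" using that by (simp add: S_def)
    then have "Sup S + s \<le> Sup S" using bdd by (rule cSup_upper)
    then show False using that by simp
  qed
  ultimately show ?thesis by (auto simp: S_def)
qed


lemma hor_inner_eq: "hor i p \<bullet> hor i z = hor i p \<bullet> z"
  using inner_decomp[of "hor i p" z i] by simp

lemma uhalf_aux: "(hor i p - upv i) \<bullet> z = hor i p \<bullet> hor i z - hgt i z"
  by (simp add: inner_diff_left inner_diff_right hor_inner_eq hgt_def inner_commute)

lemma uhalf_eq: "uhalf i p = {z. (hor i p - upv i) \<bullet> z \<le> hgt i p}"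
  unfolding uhalf_def uhalf_aux by auto

lemma closed_uhalf: "closed (uhalf i p)"
  unfolding uhalf_eq by (rule closed_halfspace_le)

lemma convex_uhalf: "convex (uhalf i p)"
  unfolding uhalf_eq by (rule convex_halfspace_le)

lemma closed_Kdual: "closed (Kdual K i \<epsilon>)"
  unfolding Kdual_def by (intro closed_INT ballI closed_uhalf)

lemma convex_Kdual: "convex (Kdual K i \<epsilon>)"
  unfolding Kdual_def by (intro convex_INT ballI convex_uhalf)

lemma uhalf_up: "z \<in> uhalf i p \<Longrightarrow> s \<ge> 0 \<Longrightarrow> z + s *\<^sub>R upv i \<in> uhalf i p"
  by (auto simp: uhalf_def)

lemma Kdual_up: "z \<in> Kdual K i \<epsilon> \<Longrightarrow> s \<ge> 0 \<Longrightarrow> z + s *\<^sub>R upv i \<in> Kdual K i \<epsilon>"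
  unfolding Kdual_def by (auto intro: uhalf_up)

lemma Kdual_sub_uhalf: "(q, G) \<in> ovbd i (Kmain K i \<epsilon>) \<Longrightarrow> Kdual K i \<epsilon> \<subseteq> uhalf i q"
  unfolding Kdual_def by force

lemma uhalf_mono: "hor i z = hor i w \<Longrightarrow> hgt i w \<le> hgt i z \<Longrightarrow> uhalf i w \<subseteq> uhalf i z"
  by (auto simp: uhalf_def)

lemma Kmain_eq: "Kmain K i \<epsilon> = Kal K i (2 * \<epsilon>)"
  by (simp add: Kmain_def)

lemma Kdual_sub_uhalf_Sset:
  assumes K: "compact K" "convex K" and e: "\<epsilon> > 0"
    and z: "z \<in> Sset K i" "hor i z \<in> nbhd K i (3/2 * \<epsilon>)"
  shows "Kdual K i \<epsilon> \<subseteq> uhalf i z"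
proof -
  let ?M = "Kmain K i \<epsilon>"
  have hz2: "hor i z \<in> nbhd K i (2 * \<epsilon>)" using nbhd_mono[of "3/2*\<epsilon>" "2*\<epsilon>" K i] z e by auto
  have zM: "z \<in> ?M" using z hz2 by (simp add: Kmain_eq Kal_def)
  have up: "y + s *\<^sub>R upv i \<in> ?M" if "y \<in> ?M" "s \<ge> 0" for y s
  proof -
    have "y + 0 + s *\<^sub>R upv i \<in> Sset K i"
      using that by (intro Sset_up) (auto simp: Kmain_eq Kal_def)
    then show ?thesis using that by (auto simp: Kmain_eq Kal_def)
  qed
  obtain \<tau> where \<tau>: "\<tau> \<ge> 0" "z - \<tau> *\<^sub>R upv i \<in> ?M" "\<forall>s>0. z - (\<tau> + s) *\<^sub>R upv i \<notin> ?M"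
  proof -
    have "\<tau> \<le> hgt i z + supp_fun K (sunit i)" if "z - \<tau> *\<^sub>R upv i \<in> ?M" for \<tau>
    proof -
      have "z - \<tau> *\<^sub>R upv i \<in> Sset K i" using that by (simp add: Kmain_eq Kal_def)
      from Sset_hgt_lb[OF this] show ?thesis by simp
    qed
    then show ?thesis using lowest_exists[OF closed_Kal[OF K(1)] zM[unfolded Kmain_eq]] that
      by (metis Kmain_eq)
  qed
  define w where "w = z - \<tau> *\<^sub>R upv i"
  have wM: "w \<in> ?M" using \<tau> by (simp add: w_def)
  have hw: "hor i w = hor i z" by (simp add: w_def)
  have "\<exists>H. (w, H) \<in> ovbd i ?M"
  proof (rule ovbd_lowest)
    show "convex ?M" unfolding Kmain_eq by (rule convex_Kal[OF K(2)])
    show "w \<in> ?M" by fact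
    show "w + upv i \<in> ?M" using up[OF wM, of 1] by simp
    show "\<forall>s>0. w - s *\<^sub>R upv i \<notin> ?M"
      using \<tau>(3) by (simp add: w_def algebra_simps)
  next
    fix a :: "real^'a" assume a: "a \<noteq> 0" "a \<bullet> upv i = 0"
    have ha: "hor i a \<noteq> 0"
    proof
      assume "hor i a = 0"
      then have "a = 0" using decomp[of i a] a(2) by (simp add: hgt_def)
      then show False using a(1) by simp
    qed
    define \<delta> where "\<delta> = (\<epsilon>/2) / norm (hor i a)"
    have \<delta>: "\<delta> > 0" using ha e by (simp add: \<delta>_def)
    define h where "h = - \<delta> *\<^sub>R hor i a"
    have h0: "h $ fst i = 0" by (simp add: h_def)
    have nh: "norm h = \<epsilon>/2" using ha \<delta> e by (simp add: h_def \<delta>_def)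
    define y where "y = w + h + (\<Sum>k\<in>UNIV. \<bar>h $ k\<bar>) *\<^sub>R upv i"
    have yS: "y \<in> Sset K i"
      unfolding y_def using wM h0 by (intro Sset_up) (auto simp: Kmain_eq Kal_def)
    have hh: "hor i h = h" using hor_W[OF h0] .
    have "hor i y = hor i z + h" by (simp add: y_def hw hh)
    moreover have "hor i z + h \<in> nbhd K i (3/2 * \<epsilon> + \<epsilon>/2)"
      using nbhd_add[OF z(2) h0, of "\<epsilon>/2"] nh by simp
    ultimately have "hor i y \<in> nbhd K i (2 * \<epsilon>)" by simp
    then have yM: "y \<in> ?M" using yS by (simp add: Kmain_eq Kal_def)
    have "a \<bullet> h = - \<delta> * (hor i a \<bullet> hor i a)"
      using inner_decomp[of a h i] hh by (simp add: h_def)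
    moreover have "hor i a \<bullet> hor i a > 0" using ha by simp
    ultimately have "a \<bullet> h < 0" using \<delta> by (simp add: mult_pos_pos)
    then have "a \<bullet> y < a \<bullet> w" using a(2) by (simp add: y_def inner_add_right)
    then show "\<exists>y\<in>?M. a \<bullet> y < a \<bullet> w" using yM by blast
  qed
  then obtain H where "(w, H) \<in> ovbd i ?M" by blast
  then have "Kdual K i \<epsilon> \<subseteq> uhalf i w" by (rule Kdual_sub_uhalf)
  also have "\<dots> \<subseteq> uhalf i z" using hw \<tau>(1) by (intro uhalf_mono) (auto simp: w_def)
  finally show ?thesis .
qed

lemma vshift_dualh: "vshift i e (dualh i q) = {z. hgt i z = hor i q \<bullet> hor i z - hgt i q + e}"
proof (intro set_eqI iffI)
  fix z assume "z \<in> vshift i e (dualh i q)"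
  then obtain w where "w \<in> dualh i q" "z = w + e *\<^sub>R upv i" by (auto simp: vshift_def)
  then show "z \<in> {z. hgt i z = hor i q \<bullet> hor i z - hgt i q + e}" by (auto simp: dualh_def)
next
  fix z assume z: "z \<in> {z. hgt i z = hor i q \<bullet> hor i z - hgt i q + e}"
  have "z - e *\<^sub>R upv i \<in> dualh i q" using z by (auto simp: dualh_def)
  moreover have "z = (z - e *\<^sub>R upv i) + e *\<^sub>R upv i" by simp
  ultimately show "z \<in> vshift i e (dualh i q)" unfolding vshift_def by blast
qed

lemma lowerhalf_graph: "lowerhalf i {z. hgt i z = hor i q \<bullet> hor i z - hgt i q + e}
   = {z. hgt i z \<le> hor i q \<bullet> hor i z - hgt i q + e}"
proof (intro set_eqI iffI)
  fix z assume "z \<in> lowerhalf i {z. hgt i z = hor i q \<bullet> hor i z - hgt i q + e}"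
  then show "z \<in> {z. hgt i z \<le> hor i q \<bullet> hor i z - hgt i q + e}"
    by (auto simp: lowerhalf_def)
next
  fix z assume z: "z \<in> {z. hgt i z \<le> hor i q \<bullet> hor i z - hgt i q + e}"
  define w where "w = hor i z + (hor i q \<bullet> hor i z - hgt i q + e) *\<^sub>R upv i"
  have "w \<in> {z. hgt i z = hor i q \<bullet> hor i z - hgt i q + e}" "hor i w = hor i z" "hgt i z \<le> hgt i w"
    using z by (auto simp: w_def)
  then show "z \<in> lowerhalf i {z. hgt i z = hor i q \<bullet> hor i z - hgt i q + e}"
    unfolding lowerhalf_def by blast
qed

lemma sum_abs_axis: "(\<Sum>k'\<in>UNIV. \<bar>(c *\<^sub>R axis k 1 :: real^'n) $ k'\<bar>) = \<bar>c\<bar>"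
proof -
  have "(\<Sum>k'\<in>UNIV. \<bar>(c *\<^sub>R axis k 1 :: real^'n) $ k'\<bar>) = (\<Sum>k'\<in>UNIV. if k' = k then \<bar>c\<bar> else 0)"
    by (intro sum.cong) (auto simp: axis_def)
  also have "\<dots> = \<bar>c\<bar>" by simp
  finally show ?thesis .
qed

locale cap_setup =
  fixes K :: "(real^'n) set" and \<epsilon> :: real and i :: "'n \<times> bool" and pH q G
  assumes K: "compact K" "convex K" and e: "\<epsilon> > 0"
    and pH: "pH \<in> ovbd i (Kdual K i \<epsilon>)"
    and qG: "(q, G) \<in> ovbd i (Kmain K i \<epsilon>)" and sndpH: "snd pH = dualh i q"
    and qlow: "q \<in> lowbd i (Kal K i \<epsilon>)"
begin

abbreviation "U \<equiv> Kdual K i \<epsilon>"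
definition "lf s = hor i q \<bullet> s - hgt i q"

lemma lf_add: "lf (a + b) = lf a + hor i q \<bullet> b"
  by (simp add: lf_def inner_add_right)

lemma U_above: "z \<in> U \<Longrightarrow> lf (hor i z) \<le> hgt i z"
  using Kdual_sub_uhalf[OF qG] by (auto simp: uhalf_def lf_def)

lemma p_in: "fst pH \<in> U" "hgt i (fst pH) = lf (hor i (fst pH))"
proof -
  have "fst pH \<in> U \<and> fst pH \<in> snd pH" using pH by (auto simp: ovbd_def supports_def)
  then show "fst pH \<in> U" "hgt i (fst pH) = lf (hor i (fst pH))"
    using sndpH by (auto simp: dualh_def lf_def)
qed

lemma Cap_char:
  assumes "rG \<in> ovbd i U" "hgt i (fst rG) \<le> lf (hor i (fst rG)) + \<epsilon>"
  shows "rG \<in> Cap i U \<epsilon> pH"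
  using assms by (simp add: Cap_def sndpH vshift_dualh lowerhalf_graph lf_def)

lemma CBase_eq: "CBase i U \<epsilon> pH = {z \<in> U. hgt i z = lf (hor i z) + \<epsilon>}"
  by (auto simp: CBase_def sndpH vshift_dualh lf_def)

lemma box:
  assumes z: "z \<in> U" "hgt i z \<le> lf (hor i z) + \<epsilon>" and k: "k \<noteq> fst i"
  shows "\<bar>z $ k\<bar> \<le> 3"
proof -
  have qK: "q \<in> Sset K i" "hor i q \<in> nbhd K i \<epsilon>"
    using qlow by (auto simp: lowbd_def Kal_def)
  have side: "\<sigma> * z $ k \<le> 3" if s: "\<bar>\<sigma>\<bar> = 1" for \<sigma>
  proof -
    define h where "h = (\<sigma> * (\<epsilon>/2)) *\<^sub>R (axis k 1 :: real^'n)"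
    have h0: "h $ fst i = 0" using k by (simp add: h_def axis_def)
    have sh: "(\<Sum>k'\<in>UNIV. \<bar>h $ k'\<bar>) = \<epsilon>/2"
      unfolding h_def sum_abs_axis using s e by (simp add: abs_mult)
    define z' where "z' = q + h + (\<epsilon>/2) *\<^sub>R upv i"
    have z'S: "z' \<in> Sset K i" unfolding z'_def using qK(1) h0 sh by (intro Sset_up) auto
    have hh: "hor i h = h" by (rule hor_W[OF h0])
    have nh: "norm h = \<epsilon>/2" using s e by (simp add: h_def abs_mult)
    have "hor i z' = hor i q + h" by (simp add: z'_def hh)
    moreover have "hor i q + h \<in> nbhd K i (\<epsilon> + \<epsilon>/2)"
      using nbhd_add[OF qK(2) h0, of "\<epsilon>/2"] nh by simp
    ultimately have hz': "hor i z' \<in> nbhd K i (3/2 * \<epsilon>)" by (simp add: field_simps)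
    have "z \<in> uhalf i z'" using Kdual_sub_uhalf_Sset[OF K e z'S hz'] z(1) by blast
    then have "hor i z' \<bullet> hor i z - hgt i z' \<le> hgt i z" by (simp add: uhalf_def)
    moreover have "hgt i z' = hgt i q + \<epsilon>/2"
    proof -
      have "hgt i h = 0" using hgt_hor[of i h] hh by simp
      then show ?thesis by (simp add: z'_def)
    qed
    moreover have "hor i z' \<bullet> hor i z = hor i q \<bullet> hor i z + \<sigma> * (\<epsilon>/2) * z $ k"
    proof -
      have "axis k 1 \<bullet> hor i z = z $ k" using k by (simp add: inner_axis' hor_comp)
      then show ?thesis by (simp add: \<open>hor i z' = hor i q + h\<close> inner_add_left h_def)
    qed
    ultimately have "\<sigma> * (\<epsilon>/2) * z $ k \<le> 3/2 * \<epsilon>"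
      using z(2) by (simp add: lf_def)
    then have "(\<epsilon>/2) * (\<sigma> * z $ k) \<le> (\<epsilon>/2) * 3" by (simp add: algebra_simps)
    then show ?thesis using e by simp
  qed
  show ?thesis using side[of 1] side[of "-1"] by simp
qed

end

lemma Basis_vec_real: "(Basis :: (real^'n) set) = (\<lambda>k. axis k 1) ` UNIV"
  by (auto simp: Basis_vec_def)

definition emb :: "'n \<Rightarrow> ('n \<Rightarrow> real) \<times> real \<Rightarrow> real^'n" where
  "emb j = (\<lambda>(f, \<tau>). \<chi> k. if k = j then \<tau> else f k)"

lemma emb_nth: "emb j (f, \<tau>) $ k = (if k = j then \<tau> else f k)"
  by (simp add: emb_def)

lemma measurable_emb:
  fixes j :: "'n::finite"
  shows "emb j \<in> (PiM (-{j}) (\<lambda>_. lborel) \<Otimes>\<^sub>M lborel) \<rightarrow>\<^sub>M borel"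
proof (subst borel_measurable_euclidean_space, intro ballI)
  fix b :: "real^'n" assume "b \<in> Basis"
  then obtain k where b: "b = axis k 1" by (auto simp: Basis_vec_real)
  show "(\<lambda>x. emb j x \<bullet> b) \<in> borel_measurable (PiM (-{j}) (\<lambda>_. lborel) \<Otimes>\<^sub>M lborel)"
  proof (cases "k = j")
    case True
    then have "(\<lambda>x. emb j x \<bullet> b) = snd" by (auto simp: b inner_axis emb_def fun_eq_iff)
    then show ?thesis by simp
  next
    case False
    then have "(\<lambda>x. emb j x \<bullet> b) = (\<lambda>f. f k) \<circ> fst" by (auto simp: b inner_axis emb_def fun_eq_iff)
    moreover have "(\<lambda>f. f k) \<in> borel_measurable (PiM (-{j}) (\<lambda>_. lborel :: real measure))"
      using measurable_component_singleton[of k "-{j}" "\<lambda>_. lborel :: real measure"] False by simp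
    ultimately show ?thesis by (simp add: measurable_comp[OF measurable_fst])
  qed
qed

lemma lborel_vec_eq:
  fixes j :: "'n::finite"
  shows "(lborel :: (real^'n) measure) = distr (PiM (-{j}) (\<lambda>_. lborel) \<Otimes>\<^sub>M lborel) borel (emb j)"
proof (rule lborel_eqI)
  interpret P: product_sigma_finite "\<lambda>_::'n. lborel :: real measure"
    by standard
  interpret Pf: finite_product_sigma_finite "\<lambda>_::'n. lborel :: real measure" "-{j}"
    by standard simp
  fix l u :: "real^'n" assume lu: "\<And>b. b \<in> Basis \<Longrightarrow> l \<bullet> b \<le> u \<bullet> b"
  have lu': "l $ k \<le> u $ k" for k using lu[of "axis k 1"] by (auto simp: Basis_vec_real inner_axis)
  have pre: "emb j -` box l u \<inter> space (PiM (-{j}) (\<lambda>_. lborel) \<Otimes>\<^sub>M lborel)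
      = (PiE (-{j}) (\<lambda>k. {l $ k <..< u $ k})) \<times> {l $ j <..< u $ j}"
  proof (intro set_eqI)
    fix x :: "('n \<Rightarrow> real) \<times> real"
    obtain f \<tau> where x: "x = (f, \<tau>)" by fastforce
    have mb: "emb j (f,\<tau>) \<in> box l u \<longleftrightarrow> (\<forall>k. l$k < emb j (f,\<tau>) $ k \<and> emb j (f,\<tau>) $ k < u$k)"
      by (simp add: mem_box Basis_vec_real inner_axis)
    have sp: "x \<in> space (PiM (-{j}) (\<lambda>_. lborel) \<Otimes>\<^sub>M lborel) \<longleftrightarrow> f \<in> extensional (-{j})"
      by (simp add: x space_pair_measure space_PiM PiE_def)
    show "x \<in> emb j -` box l u \<inter> space (PiM (-{j}) (\<lambda>_. lborel) \<Otimes>\<^sub>M lborel) \<longleftrightarrow>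
        x \<in> (PiE (-{j}) (\<lambda>k. {l $ k <..< u $ k})) \<times> {l $ j <..< u $ j}"
    proof
      assume "x \<in> emb j -` box l u \<inter> space (PiM (-{j}) (\<lambda>_. lborel) \<Otimes>\<^sub>M lborel)"
      then have a: "\<forall>k. l$k < emb j (f,\<tau>) $ k \<and> emb j (f,\<tau>) $ k < u$k" "f \<in> extensional (-{j})"
        using mb sp by (auto simp: x)
      have "l$k < f k \<and> f k < u$k" if "k \<noteq> j" for k using a(1)[rule_format, of k] that by (simp add: emb_nth)
      moreover have "l$j < \<tau> \<and> \<tau> < u$j" using a(1)[rule_format, of j] by (simp add: emb_nth)
      ultimately show "x \<in> (PiE (-{j}) (\<lambda>k. {l $ k <..< u $ k})) \<times> {l $ j <..< u $ j}"
        using a(2) by (auto simp: x PiE_def Pi_def)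
    next
      assume "x \<in> (PiE (-{j}) (\<lambda>k. {l $ k <..< u $ k})) \<times> {l $ j <..< u $ j}"
      then have a: "\<forall>k. k \<noteq> j \<longrightarrow> l$k < f k \<and> f k < u$k" "l$j < \<tau> \<and> \<tau> < u$j" "f \<in> extensional (-{j})"
        by (auto simp: x PiE_def Pi_def)
      have "l$k < emb j (f,\<tau>) $ k \<and> emb j (f,\<tau>) $ k < u$k" for k
        using a by (cases "k = j") (auto simp: emb_nth)
      then show "x \<in> emb j -` box l u \<inter> space (PiM (-{j}) (\<lambda>_. lborel) \<Otimes>\<^sub>M lborel)"
        using mb sp a(3) by (auto simp: x)
    qed
  qed
  have "emeasure (distr (PiM (-{j}) (\<lambda>_. lborel) \<Otimes>\<^sub>M lborel) borel (emb j)) (box l u)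
      = emeasure (PiM (-{j}) (\<lambda>_. lborel) \<Otimes>\<^sub>M lborel) ((PiE (-{j}) (\<lambda>k. {l $ k <..< u $ k})) \<times> {l $ j <..< u $ j})"
    by (subst emeasure_distr[OF measurable_emb]) (auto simp: pre)
  also have "\<dots> = emeasure (PiM (-{j}) (\<lambda>_. lborel)) (PiE (-{j}) (\<lambda>k. {l $ k <..< u $ k})) * emeasure lborel {l $ j <..< u $ j}"
    by (intro sigma_finite_measure.emeasure_pair_measure_Times sigma_finite_lborel sets_PiM_I_finite) auto
  also have "\<dots> = (\<Prod>k\<in>-{j}. ennreal (u $ k - l $ k)) * ennreal (u $ j - l $ j)"
    using lu' by (subst P.emeasure_PiM) auto
  also have "\<dots> = ennreal ((\<Prod>k\<in>-{j}. (u $ k - l $ k)) * (u $ j - l $ j))"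
    using lu' by (simp add: prod_ennreal ennreal_mult prod_nonneg)
  also have "(\<Prod>k\<in>-{j}. (u $ k - l $ k)) * (u $ j - l $ j) = (\<Prod>k\<in>UNIV. (u $ k - l $ k))"
    using prod.remove[of UNIV j "\<lambda>k. u $ k - l $ k"] by (simp add: Compl_eq_Diff_UNIV mult.commute)
  also have "(\<Prod>k\<in>UNIV. (u $ k - l $ k)) = (\<Prod>b\<in>Basis. (u - l) \<bullet> b)"
    unfolding Basis_vec_real
    by (subst prod.reindex) (auto simp: inj_on_def axis_eq_axis inner_axis)
  finally show "emeasure (distr (PiM (-{j}) (\<lambda>_. lborel) \<Otimes>\<^sub>M lborel) borel (emb j)) (box l u)
      = (\<Prod>b\<in>Basis. (u - l) \<bullet> b)" .
qed simp


lemma proj_image_eq: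
  fixes E :: "(real^'n::finite) set" and j :: 'n
  assumes E: "\<forall>w\<in>E. w $ j = 0"
  shows "(\<lambda>z. restrict (\<lambda>k. z $ k) (-{j})) ` E
       = {f \<in> space (PiM (-{j}) (\<lambda>_. lborel :: real measure)). emb j (f, 0) \<in> E}"
proof (intro set_eqI iffI)
  fix f assume "f \<in> (\<lambda>z. restrict (\<lambda>k. z $ k) (-{j})) ` E"
  then obtain z where z: "z \<in> E" "f = restrict (\<lambda>k. z $ k) (-{j})" by blast
  have "emb j (f, 0) $ k = z $ k" for k using E z by (simp add: emb_nth)
  then have "emb j (f, 0) = z" by (simp add: vec_eq_iff)
  then show "f \<in> {f \<in> space (PiM (-{j}) (\<lambda>_. lborel :: real measure)). emb j (f, 0) \<in> E}"
    using z by (simp add: space_PiM)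
next
  fix f assume f: "f \<in> {f \<in> space (PiM (-{j}) (\<lambda>_. lborel :: real measure)). emb j (f, 0) \<in> E}"
  then have ext: "f \<in> extensional (-{j})" by (simp add: space_PiM PiE_def)
  have "restrict (\<lambda>k. emb j (f, 0) $ k) (-{j}) k = f k" for k
  proof (cases "k = j")
    case True then show ?thesis using ext by (simp add: extensional_def)
  next
    case False then show ?thesis by (simp add: emb_nth)
  qed
  then have "f = restrict (\<lambda>k. emb j (f, 0) $ k) (-{j})" by (simp add: fun_eq_iff)
  moreover have "emb j (f, 0) \<in> E" using f by simp
  ultimately show "f \<in> (\<lambda>z. restrict (\<lambda>k. z $ k) (-{j})) ` E" by (rule image_eqI)
qed

lemma prism_measure:
  fixes E :: "(real^'n::finite) set" and j :: 'n and \<phi> :: "real^'n \<Rightarrow> real"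
  assumes E: "compact E" "\<forall>w\<in>E. w $ j = 0" and \<phi>: "continuous_on E \<phi>" and ab: "a \<le> b"
  shows "emeasure lebesgue {w + (\<phi> w + v) *\<^sub>R axis j 1 | w v. w \<in> E \<and> v \<in> {a..b}}
    = ennreal (b - a) * emeasure (PiM (-{j}) (\<lambda>_. lborel)) ((\<lambda>z. restrict (\<lambda>k. z $ k) (-{j})) ` E)"
proof -
  define S where "S = {w + (\<phi> w + v) *\<^sub>R axis j 1 | w v. w \<in> E \<and> v \<in> {a..b}}"
  define P where "P = PiM (-{j}) (\<lambda>_. lborel :: real measure)"
  have SI: "S = (\<lambda>x. fst x + (\<phi> (fst x) + snd x) *\<^sub>R axis j 1) ` (E \<times> {a..b})"
    unfolding S_def by (auto simp: image_def) (metis atLeastAtMost_iff)+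
  have "compact S" unfolding SI
    by (intro compact_continuous_image compact_Times E compact_Icc continuous_intros
        continuous_on_compose2[OF \<phi>]) auto
  then have Sb: "S \<in> sets borel" by (simp add: compact_imp_closed borel_closed)
  have Sb': "S \<in> sets lborel" using Sb by simp
  have eS: "emeasure lebesgue S = emeasure lborel S" using Sb' by simp
  also have "\<dots> = emeasure (distr (P \<Otimes>\<^sub>M lborel) borel (emb j)) S"
    by (simp add: P_def flip: lborel_vec_eq)
  also have "\<dots> = emeasure (P \<Otimes>\<^sub>M lborel) (emb j -` S \<inter> space (P \<Otimes>\<^sub>M lborel))"
    by (rule emeasure_distr[OF measurable_emb[of j, folded P_def] Sb])
  also have "\<dots> = (\<integral>\<^sup>+f. emeasure lborel (Pair f -` (emb j -` S \<inter> space (P \<Otimes>\<^sub>M lborel))) \<partial>P)"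
    by (rule sigma_finite_measure.emeasure_pair_measure_alt[OF sigma_finite_lborel])
      (rule measurable_sets[OF measurable_emb[of j, folded P_def] Sb])
  also have "\<dots> = (\<integral>\<^sup>+f. ennreal (b - a) * indicator {f \<in> space P. emb j (f, 0) \<in> E} f \<partial>P)"
  proof (intro nn_integral_cong)
    fix f assume f: "f \<in> space P"
    define wf where "wf = emb j (f, 0)"
    have wfj: "wf $ j = 0" by (simp add: wf_def emb_nth)
    have sec: "Pair f -` (emb j -` S \<inter> space (P \<Otimes>\<^sub>M lborel))
        = (if wf \<in> E then {\<phi> wf + a .. \<phi> wf + b} else {})"
    proof (intro set_eqI)
      fix \<tau>
      have e1: "emb j (f, \<tau>) = wf + \<tau> *\<^sub>R axis j 1"
        by (auto simp: vec_eq_iff emb_nth wf_def axis_def)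
      have "emb j (f, \<tau>) \<in> S \<longleftrightarrow> wf \<in> E \<and> \<tau> \<in> {\<phi> wf + a .. \<phi> wf + b}"
      proof
        assume "emb j (f, \<tau>) \<in> S"
        then obtain w v where wv: "w \<in> E" "v \<in> {a..b}" "emb j (f, \<tau>) = w + (\<phi> w + v) *\<^sub>R axis j 1"
          by (auto simp: S_def)
        have wj: "w $ j = 0" using E(2) wv(1) by blast
        have "w = wf"
        proof (rule iffD2[OF vec_eq_iff], rule allI)
          fix k show "w $ k = wf $ k"
          proof (cases "k = j")
            case True then show ?thesis using wj wfj by simp
          next
            case False
            have "emb j (f, \<tau>) $ k = w $ k" using wv(3) False by (simp add: axis_def)
            then show ?thesis using False by (simp add: wf_def emb_nth)
          qed
        qed
        moreover have "\<tau> = \<phi> w + v"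
          using arg_cong[OF wv(3), of "\<lambda>x. x $ j"] wj by (simp add: emb_nth axis_def)
        ultimately show "wf \<in> E \<and> \<tau> \<in> {\<phi> wf + a .. \<phi> wf + b}" using wv by auto
      next
        assume "wf \<in> E \<and> \<tau> \<in> {\<phi> wf + a .. \<phi> wf + b}"
        then have "wf \<in> E" "\<tau> - \<phi> wf \<in> {a..b}" by auto
        moreover have "emb j (f, \<tau>) = wf + (\<phi> wf + (\<tau> - \<phi> wf)) *\<^sub>R axis j 1" using e1 by simp
        ultimately show "emb j (f, \<tau>) \<in> S" unfolding S_def by blast
      qed
      moreover have "(f, \<tau>) \<in> space (P \<Otimes>\<^sub>M lborel)" using f by (simp add: space_pair_measure)
      ultimately show "\<tau> \<in> Pair f -` (emb j -` S \<inter> space (P \<Otimes>\<^sub>M lborel)) \<longleftrightarrow>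
          \<tau> \<in> (if wf \<in> E then {\<phi> wf + a .. \<phi> wf + b} else {})"
        by auto
    qed
    show "emeasure lborel (Pair f -` (emb j -` S \<inter> space (P \<Otimes>\<^sub>M lborel)))
        = ennreal (b - a) * indicator {f \<in> space P. emb j (f, 0) \<in> E} f"
      unfolding sec using f ab by (simp add: wf_def[symmetric] indicator_def)
  qed
  also have "\<dots> = ennreal (b - a) * emeasure P {f \<in> space P. emb j (f, 0) \<in> E}"
  proof (rule nn_integral_cmult_indicator)
    have pm: "(\<lambda>f. (f, 0::real)) \<in> P \<rightarrow>\<^sub>M P \<Otimes>\<^sub>M lborel"
      by (intro measurable_Pair measurable_ident_sets refl measurable_const) auto
    have "(\<lambda>f. emb j (f, 0)) \<in> P \<rightarrow>\<^sub>M borel"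
      using measurable_comp[OF pm measurable_emb[of j, folded P_def]]
      by (simp add: comp_def)
    moreover have "E \<in> sets borel" using E(1) by (simp add: compact_imp_closed borel_closed)
    ultimately show "{f \<in> space P. emb j (f, 0) \<in> E} \<in> sets P"
      by (simp add: measurable_sets_Collect)
  qed
  finally show ?thesis
    unfolding S_def[symmetric] P_def proj_image_eq[OF E(2)] by simp
qed

lemma proj_meas:
  fixes E :: "(real^'n::finite) set" and j :: 'n
  assumes "closed E"
  shows "{f \<in> space (PiM (-{j}) (\<lambda>_. lborel :: real measure)). emb j (f, 0) \<in> E} \<in> sets (PiM (-{j}) (\<lambda>_. lborel :: real measure))"
proof -
  define P where "P = PiM (-{j}) (\<lambda>_. lborel :: real measure)"
  have pm: "(\<lambda>f. (f, 0::real)) \<in> P \<rightarrow>\<^sub>M P \<Otimes>\<^sub>M lborel"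
    by (intro measurable_Pair measurable_ident_sets refl measurable_const) auto
  have "(\<lambda>f. emb j (f, 0)) \<in> P \<rightarrow>\<^sub>M borel"
    using measurable_comp[OF pm measurable_emb[of j, folded P_def]]
    by (simp add: comp_def)
  moreover have "E \<in> sets borel" using assms by (simp add: borel_closed)
  ultimately show ?thesis unfolding P_def[symmetric]
    by (simp add: measurable_sets_Collect)
qed

lemma area_eq:
  assumes "compact E" "\<forall>w\<in>E. w $ fst i = 0"
  shows "area i E = emeasure (PiM (-{fst i}) (\<lambda>_. lborel)) ((\<lambda>z. restrict (\<lambda>k. z $ k) (-{fst i})) ` E)"
  unfolding area_def proj_image_eq[OF assms(2)]
  using proj_meas[of E "fst i"] assms(1) compact_imp_closed by (subst emeasure_completion) auto

lemma upv_axis: "upv i = (if snd i then -1 else 1) *\<^sub>R axis (fst i) 1"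
  by (rule upv_eq)

lemma prism_upv:
  fixes E :: "(real^'n::finite) set" and \<psi> :: "real^'n \<Rightarrow> real"
  assumes E: "compact E" "\<forall>w\<in>E. w $ fst i = 0" and \<psi>: "continuous_on E \<psi>" and r: "r \<ge> 0"
  shows "emeasure lebesgue {w + (\<psi> w + v) *\<^sub>R upv i | w v. w \<in> E \<and> v \<in> {-r..r}} = ennreal (2 * r) * area i E"
proof -
  define \<sigma> :: real where "\<sigma> = (if snd i then -1 else 1)"
  have s: "\<sigma> * \<sigma> = 1" by (simp add: \<sigma>_def)
  have eq: "{w + (\<psi> w + v) *\<^sub>R upv i | w v. w \<in> E \<and> v \<in> {-r..r}}
      = {w + ((\<lambda>w. \<sigma> * \<psi> w) w + v) *\<^sub>R axis (fst i) 1 | w v. w \<in> E \<and> v \<in> {-r..r}}"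
  proof (intro set_eqI iffI)
    fix z assume "z \<in> {w + (\<psi> w + v) *\<^sub>R upv i | w v. w \<in> E \<and> v \<in> {-r..r}}"
    then obtain w v where wv: "w \<in> E" "v \<in> {-r..r}" "z = w + (\<psi> w + v) *\<^sub>R upv i" by blast
    have "z = w + ((\<lambda>w. \<sigma> * \<psi> w) w + \<sigma> * v) *\<^sub>R axis (fst i) 1"
      using wv(3) by (simp add: upv_axis \<sigma>_def[symmetric] algebra_simps)
    moreover have "\<sigma> * v \<in> {-r..r}" using wv(2) by (auto simp: \<sigma>_def)
    ultimately show "z \<in> {w + ((\<lambda>w. \<sigma> * \<psi> w) w + v) *\<^sub>R axis (fst i) 1 | w v. w \<in> E \<and> v \<in> {-r..r}}"
      using wv(1) by blast
  next
    fix z assume "z \<in> {w + ((\<lambda>w. \<sigma> * \<psi> w) w + v) *\<^sub>R axis (fst i) 1 | w v. w \<in> E \<and> v \<in> {-r..r}}"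
    then obtain w v where wv: "w \<in> E" "v \<in> {-r..r}" "z = w + (\<sigma> * \<psi> w + v) *\<^sub>R axis (fst i) 1" by blast
    have "z = w + (\<psi> w + \<sigma> * v) *\<^sub>R upv i"
      using wv(3) s by (simp add: upv_axis \<sigma>_def[symmetric] algebra_simps)
    moreover have "\<sigma> * v \<in> {-r..r}" using wv(2) by (auto simp: \<sigma>_def)
    ultimately show "z \<in> {w + (\<psi> w + v) *\<^sub>R upv i | w v. w \<in> E \<and> v \<in> {-r..r}}"
      using wv(1) by blast
  qed
  have "continuous_on E (\<lambda>w. \<sigma> * \<psi> w)" by (intro continuous_intros \<psi>)
  from prism_measure[OF E this, of "-r" r] r
  show ?thesis unfolding eq area_eq[OF E] by simp
qed

lemma area_zero_hyperplane:
  fixes E :: "(real^'n::finite) set"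
  assumes E: "compact E" "\<forall>w\<in>E. w $ fst i = 0" and a: "a $ fst i = 0" "a \<noteq> 0"
    and h: "\<forall>w\<in>E. a \<bullet> w = \<beta>"
  shows "area i E = 0"
proof -
  have au: "a \<bullet> upv i = 0" using a by (simp add: upv_axis inner_axis)
  have sub: "{w + (0 + v) *\<^sub>R upv i | w v. w \<in> E \<and> v \<in> {-1..1}} \<subseteq> {z. a \<bullet> z = \<beta>}"
    using h au by (auto simp: inner_add_right)
  have "negligible {w + (0 + v) *\<^sub>R upv i | w v. w \<in> E \<and> v \<in> {-1..1::real}}"
    by (rule negligible_subset[OF negligible_hyperplane sub]) (use a in auto)
  then have "emeasure lebesgue {w + (0 + v) *\<^sub>R upv i | w v. w \<in> E \<and> v \<in> {-1..1::real}} = 0"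
    unfolding negligible_iff_null_sets by (rule null_setsD1)
  moreover have "emeasure lebesgue {w + ((\<lambda>_. 0) w + v) *\<^sub>R upv i | w v. w \<in> E \<and> v \<in> {-1..1::real}} = ennreal (2 * 1) * area i E"
    by (rule prism_upv[OF E]) auto
  ultimately show ?thesis by simp
qed


lemma compact_rowset: "compact D \<Longrightarrow> compact {M::real^'n::finite^'n. \<forall>k. M$k \<in> D}"
proof -
  assume D: "compact D"
  have c: "closed {M::real^'n::finite^'n. \<forall>k. M$k \<in> D}"
  proof -
    have "{M::real^'n::finite^'n. \<forall>k. M$k \<in> D} = (\<Inter>k. (\<lambda>M. M $ k) -` D)" by auto
    moreover have "closed ((\<lambda>M::real^'n::finite^'n. M $ k) -` D)" for k
      by (intro continuous_closed_vimage compact_imp_closed D) (simp add: bounded_linear_vec_nth linear_continuous_at)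
    ultimately show ?thesis by (metis closed_INT)
  qed
  obtain R where R: "\<forall>x\<in>D. norm x \<le> R" using D compact_imp_bounded bounded_iff by metis
  have "norm M \<le> (\<Sum>k\<in>UNIV. norm (M $ k))" for M :: "real^'n^'n"
    by (simp add: norm_vec_def L2_set_le_sum)
  then have "bounded {M::real^'n::finite^'n. \<forall>k. M$k \<in> D}"
    unfolding bounded_iff using R by (intro exI[of _ "real CARD('n) * R"] ballI) (smt (verit) mem_Collect_eq sum_bounded_above)
  then show ?thesis using c by (simp add: compact_eq_bounded_closed)
qed

lemma continuous_det_lift: "continuous_on S (\<lambda>M::real^'n::finite^'n. det (\<chi> k. M $ k + a))"
  unfolding det_def by (intro continuous_intros)

lemma row_eq[simp]: "row k A = A $ k"
  by (simp add: row_def vec_eq_iff)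

lemma asym_center:
  fixes D :: "(real^'n::finite) set" and i :: "'n \<times> bool"
  assumes D: "compact D" "convex D" "D \<noteq> {}" "\<forall>w\<in>D. w $ fst i = 0" and A: "area i D \<noteq> 0"
  shows "\<exists>c\<in>D. \<forall>x\<in>D. c - (1 / real CARD('n)) *\<^sub>R (x - c) \<in> D"
proof -
  define j where "j = fst i"
  define a0 :: "real^'n" where "a0 = axis j 1"
  define Mset where "Mset = {M::real^'n^'n. \<forall>k. M$k \<in> D}"
  define F where "F M = det (\<chi> k. M $ k + a0)" for M :: "real^'n^'n"
  obtain x0 where x0: "x0 \<in> D" using D(3) by blast
  have Mne: "Mset \<noteq> {}" using x0 by (auto simp: Mset_def intro!: exI[of _ "\<chi> k. x0"])
  have "continuous_on Mset (\<lambda>M. \<bar>F M\<bar>)" unfolding F_def by (intro continuous_intros continuous_det_lift)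
  then obtain M0 where M0: "M0 \<in> Mset" "\<And>M. M \<in> Mset \<Longrightarrow> \<bar>F M\<bar> \<le> \<bar>F M0\<bar>"
    using continuous_attains_sup[OF compact_rowset[OF D(1), folded Mset_def] Mne] by metis
  have Dj: "x $ j = 0" if "x \<in> D" for x using D(4) that by (simp add: j_def)
  have F0: "F M0 \<noteq> 0"
  proof
    assume "F M0 = 0"
    then have allz: "F M = 0" if "M \<in> Mset" for M using M0(2)[OF that] by simp
    define S where "S = (\<lambda>x. x + a0) ` D"
    show False
    proof (cases "dim S < CARD('n)")
      case True
      then have "dim S < DIM(real^'n)" by simp
      then obtain a :: "real^'n" where a: "a \<noteq> 0" "\<And>y. y \<in> span S \<Longrightarrow> orthogonal a y"
        using orthogonal_to_subspace_exists[OF \<open>dim S < DIM(real^'n)\<close>] by blast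
      have aS: "a \<bullet> (x + a0) = 0" if "x \<in> D" for x
        using a(2)[OF span_base] that by (auto simp: S_def orthogonal_def)
      define a' where "a' = a - (a $ j) *\<^sub>R a0"
      have a'j: "a' $ j = 0" by (simp add: a'_def a0_def)
      have a'x: "a' \<bullet> x = - (a $ j)" if "x \<in> D" for x
      proof -
        have "a \<bullet> x + a $ j = 0" using aS[OF that] by (simp add: inner_add_right a0_def inner_axis)
        moreover have "a0 \<bullet> x = 0" using Dj[OF that] by (simp add: a0_def inner_axis')
        ultimately show ?thesis by (simp add: a'_def inner_diff_left)
      qed
      have "a' \<noteq> 0"
      proof
        assume "a' = 0"
        then have aa: "a = (a $ j) *\<^sub>R a0" by (simp add: a'_def)
        have "a $ j = 0" using a'x[OF x0] \<open>a' = 0\<close> by simp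
        then show False using aa a(1) by simp
      qed
      then have "area i D = 0"
        using area_zero_hyperplane[OF D(1) D(4), of a' "- (a $ j)"] a'j a'x by (simp add: j_def)
      then show False using A by simp
    next
      case False
      then have dS: "dim S = CARD('n)" using dim_subset_UNIV_cart[of S] by simp
      obtain B where B: "B \<subseteq> S" "independent B" "S \<subseteq> span B" "card B = dim S"
        by (rule real_vector.basis_exists)
      have fB: "finite B" using B(2) by (rule independent_imp_finite)
      obtain h where h: "bij_betw h (UNIV::'n set) B"
        using finite_same_card_bij[of "UNIV::'n set" B] fB B(4) dS by auto
      have hS: "h k \<in> S" for k using h B(1) by (auto simp: bij_betw_def)
      define X where "X k = h k - a0" for k
      have XD: "X k \<in> D" for k using hS[of k] by (auto simp: S_def X_def)
      define L :: "real^'n^'n" where "L = (\<chi> k. h k)"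
      have "F (\<chi> k. X k) = det L" by (simp add: F_def X_def L_def)
      moreover have "(\<chi> k. X k) \<in> Mset" using XD by (simp add: Mset_def)
      ultimately have "det L = 0" using allz by simp
      then have "\<not> (\<exists>B'. L ** B' = mat 1)"
        using invertible_det_nz[of L] invertible_right_inverse[of L] by simp
      then obtain c k where c: "(\<Sum>m\<in>UNIV. c m *s row m L) = 0" "c k \<noteq> 0"
        unfolding matrix_right_invertible_independent_rows by blast
      define u where "u v = c (inv_into UNIV h v)" for v
      have hinv: "inv_into UNIV h (h m) = m" for m
        using h by (simp add: bij_betw_def inv_into_f_f)
      have "(\<Sum>v\<in>B. u v *\<^sub>R v) = (\<Sum>m\<in>UNIV. u (h m) *\<^sub>R h m)"
        using sum.reindex_bij_betw[OF h, of "\<lambda>v. u v *\<^sub>R v"] by simp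
      also have "\<dots> = (\<Sum>m\<in>UNIV. c m *s row m L)"
        by (simp add: u_def hinv L_def scalar_mult_eq_scaleR)
      finally have "(\<Sum>v\<in>B. u v *\<^sub>R v) = 0" using c(1) by simp
      moreover have "h k \<in> B" "u (h k) \<noteq> 0" using h c(2) by (auto simp: bij_betw_def u_def hinv)
      ultimately have "dependent B"
        unfolding real_vector.dependent_explicit using fB by blast
      then show False using B(2) by simp
    qed
  qed
  define L :: "real^'n^'n" where "L = (\<chi> k. M0 $ k + a0)"
  have dL: "det L \<noteq> 0" using F0 by (simp add: F_def L_def)
  define dd where "dd = real CARD('n)"
  have dd0: "dd \<ge> 1" by (simp add: dd_def)
  define c where "c = (\<Sum>k\<in>UNIV. (1/dd) *\<^sub>R M0 $ k)"
  have M0D: "M0 $ k \<in> D" for k using M0(1) by (simp add: Mset_def)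
  have cD: "c \<in> D"
    unfolding c_def using dd0 M0D by (intro convex_sum D(2)) (auto simp: dd_def)
  have key: "c - (1 / dd) *\<^sub>R (x - c) \<in> D" if x: "x \<in> D" for x
  proof -
    obtain lam :: "real^'n" where lam: "transpose L *v lam = x + a0"
      using cramer[of "transpose L" _ "x + a0"] dL by (auto simp: det_transpose)
    have lsum: "(\<Sum>k\<in>UNIV. lam $ k *s row k L) = x + a0"
      using lam by (simp add: matrix_mult_sum column_transpose)
    have lam_le: "\<bar>lam $ k\<bar> \<le> 1" for k
    proof -
      define M' where "M' = (\<chi> m. if m = k then x else M0 $ m)"
      have M'M: "M' \<in> Mset" using x M0D by (simp add: Mset_def M'_def)
      have "F M' = det (\<chi> m. if m = k then (\<Sum>i\<in>UNIV. lam $ i *s row i L) else row m L)"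
        unfolding F_def lsum by (rule arg_cong[of _ _ det]) (simp add: vec_eq_iff M'_def L_def)
      also have "\<dots> = lam $ k * det L" by (rule cramer_lemma_transpose)
      finally have "\<bar>lam $ k * det L\<bar> \<le> \<bar>det L\<bar>" using M0(2)[OF M'M] by (simp add: F_def L_def)
      then have "\<bar>lam $ k\<bar> * \<bar>det L\<bar> \<le> 1 * \<bar>det L\<bar>" by (simp add: abs_mult)
      then show ?thesis using dL by (simp add: mult_le_cancel_right)
    qed
    have lsum': "(\<Sum>k\<in>UNIV. lam $ k *\<^sub>R M0 $ k) + (\<Sum>k\<in>UNIV. lam $ k) *\<^sub>R a0 = x + a0"
      using lsum by (simp add: L_def scalar_mult_eq_scaleR scaleR_add_right sum.distrib scaleR_sum_left)
    have s1: "(\<Sum>k\<in>UNIV. lam $ k) = 1"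
    proof -
      have "((\<Sum>k\<in>UNIV. lam $ k *\<^sub>R M0 $ k) + (\<Sum>k\<in>UNIV. lam $ k) *\<^sub>R a0) $ j = (x + a0) $ j"
        using lsum' by simp
      then show ?thesis using Dj[OF x] M0D Dj by (simp add: a0_def)
    qed
    have xs: "x = (\<Sum>k\<in>UNIV. lam $ k *\<^sub>R M0 $ k)" using lsum' s1 by simp
    define mu where "mu k = (1/dd) * (1 + 1/dd) - lam $ k / dd" for k
    have eq: "c - (1 / dd) *\<^sub>R (x - c) = (\<Sum>k\<in>UNIV. mu k *\<^sub>R M0 $ k)"
      by (simp add: c_def xs mu_def scaleR_sum_right sum_subtractf[symmetric] algebra_simps
          scaleR_diff_left scaleR_add_left flip: sum.distrib)
    have mu0: "0 \<le> mu k" for k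
    proof -
      have "lam $ k / dd \<le> 1 / dd" using lam_le[of k] dd0 by (simp add: divide_right_mono)
      moreover have "0 \<le> 1 / (dd * dd)" by simp
      ultimately have "lam $ k / dd \<le> 1 / dd + 1 / (dd * dd)" by linarith
      then show ?thesis by (simp add: mu_def algebra_simps)
    qed
    have mus: "sum mu UNIV = 1"
    proof -
      have "sum mu UNIV = dd * ((1/dd) * (1 + 1/dd)) - (\<Sum>k\<in>UNIV. lam $ k) / dd"
        by (simp add: mu_def sum_subtractf sum_divide_distrib dd_def)
      also have "\<dots> = 1" using s1 dd0 by (simp add: field_simps)
      finally show ?thesis .
    qed
    show ?thesis unfolding eq using mu0 mus M0D by (intro convex_sum D(2)) auto
  qed
  show ?thesis using cD key by (auto simp: dd_def)
qed

lemma hor_hgt_eq: "hor i x = hor i y \<Longrightarrow> hgt i x = hgt i y \<Longrightarrow> x = y"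
  by (metis decomp)

lemma hor_W_iff: "hor i x = x \<longleftrightarrow> x $ fst i = 0"
  by (metis hor_W hor_fst)

context cap_setup
begin

definition "Dset = hor i ` CBase i U \<epsilon> pH"

lemma CBase_closed: "closed (CBase i U \<epsilon> pH)"
proof -
  have eq: "CBase i U \<epsilon> pH = U \<inter> {z. hgt i z - (hor i q \<bullet> hor i z - hgt i q + \<epsilon>) = 0}"
    by (auto simp: CBase_eq lf_def)
  have c1: "closed {z. hgt i z - (hor i q \<bullet> hor i z - hgt i q + \<epsilon>) = 0}"
    unfolding hgt_def by (intro closed_Collect_eq continuous_intros isCont_hor) 
  show ?thesis unfolding eq by (rule closed_Int[OF closed_Kdual c1])
qed

lemma CBase_bounded: "bounded (CBase i U \<epsilon> pH)"
proof -
  have nh: "norm (hor i z) \<le> 3 * real CARD('n)" if "z \<in> CBase i U \<epsilon> pH" for z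
  proof -
    have zU: "z \<in> U" "hgt i z \<le> lf (hor i z) + \<epsilon>" using that by (auto simp: CBase_eq)
    have "norm (hor i z) \<le> (\<Sum>k\<in>UNIV. \<bar>hor i z $ k\<bar>)" by (rule norm_le_l1_cart)
    also have "\<dots> \<le> (\<Sum>k\<in>(UNIV::'n set). 3)"
    proof (rule sum_mono)
      fix k show "\<bar>hor i z $ k\<bar> \<le> 3"
        using box[OF zU] by (cases "k = fst i") (auto simp: hor_comp)
    qed
    finally show ?thesis by simp
  qed
  have nz: "norm z \<le> 3 * real CARD('n) + (norm (hor i q) * (3 * real CARD('n)) + \<bar>hgt i q\<bar> + \<epsilon>)"
    if "z \<in> CBase i U \<epsilon> pH" for z
  proof -
    have hz: "hgt i z = hor i q \<bullet> hor i z - hgt i q + \<epsilon>" using that by (auto simp: CBase_eq lf_def)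
    have "\<bar>hor i q \<bullet> hor i z\<bar> \<le> norm (hor i q) * norm (hor i z)" by (rule Cauchy_Schwarz_ineq2)
    also have "\<dots> \<le> norm (hor i q) * (3 * real CARD('n))" using nh[OF that] by (simp add: mult_left_mono)
    finally have "\<bar>hgt i z\<bar> \<le> norm (hor i q) * (3 * real CARD('n)) + \<bar>hgt i q\<bar> + \<epsilon>"
      using hz e by linarith
    moreover have "norm z \<le> norm (hor i z) + \<bar>hgt i z\<bar>"
    proof -
      have "norm z = norm (hor i z + hgt i z *\<^sub>R upv i)" by (simp add: decomp)
      also have "\<dots> \<le> norm (hor i z) + norm (hgt i z *\<^sub>R upv i)" by (rule norm_triangle_ineq)
      also have "\<dots> = norm (hor i z) + \<bar>hgt i z\<bar>" by (simp add: upv_def norm_sunit)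
      finally show ?thesis .
    qed
    ultimately show ?thesis using nh[OF that] by linarith
  qed
  then show ?thesis unfolding bounded_iff by blast
qed

lemma CBase_convex: "convex (CBase i U \<epsilon> pH)"
proof -
  have "CBase i U \<epsilon> pH = U \<inter> {z. (hor i q - upv i) \<bullet> z = hgt i q - \<epsilon>}"
    by (auto simp: CBase_eq lf_def uhalf_aux)
  then show ?thesis by (simp add: convex_Int convex_Kdual convex_hyperplane)
qed

lemma Dset_compact: "compact Dset"
  unfolding Dset_def
  by (intro compact_continuous_image continuous_on_hor)
    (simp add: compact_eq_bounded_closed CBase_closed CBase_bounded)

lemma Dset_convex: "convex Dset"
  unfolding Dset_def by (intro convex_linear_image linear_hor CBase_convex)

lemma Dset_W: "s \<in> Dset \<Longrightarrow> s $ fst i = 0"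
  by (auto simp: Dset_def)

lemma Dset_up: "s \<in> Dset \<Longrightarrow> s + (lf s + \<epsilon>) *\<^sub>R upv i \<in> U"
proof -
  assume "s \<in> Dset"
  then obtain z where z: "z \<in> CBase i U \<epsilon> pH" "s = hor i z" by (auto simp: Dset_def)
  then have "z = s + (lf s + \<epsilon>) *\<^sub>R upv i"
    using decomp[of i z] by (auto simp: CBase_eq)
  then show ?thesis using z by (auto simp: CBase_eq)
qed

lemma ps_in: "hor i (fst pH) \<in> Dset"
proof -
  have "fst pH + \<epsilon> *\<^sub>R upv i \<in> CBase i U \<epsilon> pH"
    using p_in e Kdual_up[of "fst pH" K i \<epsilon> \<epsilon>] by (auto simp: CBase_eq)
  moreover have "hor i (fst pH + \<epsilon> *\<^sub>R upv i) = hor i (fst pH)" by simp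
  ultimately show ?thesis unfolding Dset_def by (metis image_eqI)
qed

end


locale cap_large = cap_setup K \<epsilon> i pH q G
  for K :: "(real^'n::finite) set" and \<epsilon> i pH q G +
  fixes t :: real
  assumes t: "t > 0" and large: "ennreal t \<le> area i Dset"
begin

lemma area_nz: "area i Dset \<noteq> 0"
  using t large by (metis ennreal_eq_0_iff ennreal_le_iff2 le_zero_eq linorder_not_le)

definition "cc = (SOME c. c \<in> Dset \<and> (\<forall>x\<in>Dset. c - (1 / real CARD('n)) *\<^sub>R (x - c) \<in> Dset))"

lemma cc_props: "cc \<in> Dset" "\<And>x. x \<in> Dset \<Longrightarrow> cc - (1 / real CARD('n)) *\<^sub>R (x - cc) \<in> Dset"
proof -
  have "\<exists>c\<in>Dset. \<forall>x\<in>Dset. c - (1 / real CARD('n)) *\<^sub>R (x - c) \<in> Dset"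
    by (rule asym_center[OF Dset_compact Dset_convex _ _ area_nz]) (use ps_in Dset_W in auto)
  then obtain c0 where "c0 \<in> Dset \<and> (\<forall>x\<in>Dset. c0 - (1 / real CARD('n)) *\<^sub>R (x - c0) \<in> Dset)" by blast
  then have "cc \<in> Dset \<and> (\<forall>x\<in>Dset. cc - (1 / real CARD('n)) *\<^sub>R (x - cc) \<in> Dset)"
    unfolding cc_def by (rule someI)
  then show "cc \<in> Dset" "\<And>x. x \<in> Dset \<Longrightarrow> cc - (1 / real CARD('n)) *\<^sub>R (x - cc) \<in> Dset" by auto
qed

lemma dd1: "real CARD('n) \<ge> 1" by simp

lemma D_sym:
  assumes y: "y \<in> Dset" and mu: "\<bar>\<mu>\<bar> \<le> 1"
  shows "cc + (\<mu> / real CARD('n)) *\<^sub>R (y - cc) \<in> Dset"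
proof -
  have plus: "cc + (1/real CARD('n)) *\<^sub>R (y - cc) \<in> Dset"
  proof -
    have "cc + (1/real CARD('n)) *\<^sub>R (y - cc) = (1 - 1/real CARD('n)) *\<^sub>R cc + (1/real CARD('n)) *\<^sub>R y" by (simp add: algebra_simps)
    moreover have "(1 - 1/real CARD('n)) *\<^sub>R cc + (1/real CARD('n)) *\<^sub>R y \<in> Dset"
      using Dset_convex cc_props(1) y dd1 by (intro convexD) auto
    ultimately show ?thesis by simp
  qed
  have minus: "cc - (1/real CARD('n)) *\<^sub>R (y - cc) \<in> Dset" using cc_props(2)[OF y] by simp
  have "cc + (\<mu> / real CARD('n)) *\<^sub>R (y - cc) = ((1 + \<mu>)/2) *\<^sub>R (cc + (1/real CARD('n)) *\<^sub>R (y - cc)) + ((1 - \<mu>)/2) *\<^sub>R (cc - (1/real CARD('n)) *\<^sub>R (y - cc))"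
    by (simp add: vec_eq_iff field_simps)
  also have "\<dots> \<in> Dset"
  proof -
    have "(1 + \<mu>)/2 + (1 - \<mu>)/2 = (1::real)" by (simp add: add_divide_distrib[symmetric])
    then show ?thesis using Dset_convex plus minus mu by (intro convexD) auto
  qed
  finally show ?thesis .
qed

definition "x0 = (1/2) *\<^sub>R (fst pH + (cc + (lf cc + \<epsilon>) *\<^sub>R upv i))"

definition "tau y v = (1/(8*real CARD('n))) *\<^sub>R (y - cc) + (hor i q \<bullet> ((1/(8*real CARD('n))) *\<^sub>R (y - cc)) + v) *\<^sub>R upv i"

lemma cone:
  assumes y: "y \<in> Dset" and v: "\<bar>v\<bar> \<le> \<epsilon> / (8*real CARD('n))" and s: "\<bar>\<sigma>\<bar> = 1"
  shows "x0 + \<sigma> *\<^sub>R tau y v \<in> U"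
proof -
  define ps where "ps = hor i (fst pH)"
  define w where "w = (1/(8*real CARD('n))) *\<^sub>R (y - cc)"
  define \<theta> where "\<theta> = 1/2 + \<sigma> * v / \<epsilon>"
  have sv: "\<bar>\<sigma> * v / \<epsilon>\<bar> \<le> 1 / (8*real CARD('n))"
    using v s e by (simp add: abs_mult abs_div divide_le_eq field_simps)
  have dd8: "1 / (8*real CARD('n)) \<le> 1/8" using dd1 by (simp add: field_simps)
  have "\<bar>\<sigma> * v / \<epsilon>\<bar> \<le> 1/8" using sv dd8 by linarith
  then have "- (1/8) \<le> \<sigma> * v / \<epsilon>" "\<sigma> * v / \<epsilon> \<le> 1/8" by (auto simp only: abs_le_iff)
  then have th: "3/8 \<le> \<theta>" "\<theta> \<le> 5/8" unfolding \<theta>_def by linarith+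
  define \<mu>1 where "\<mu>1 = (\<theta> - 1/2) * real CARD('n)"
  have m1: "\<bar>\<mu>1\<bar> \<le> 1/8"
  proof -
    have "\<mu>1 = (\<sigma> * v / \<epsilon>) * real CARD('n)" by (simp add: \<mu>1_def \<theta>_def)
    then have "\<bar>\<mu>1\<bar> = \<bar>\<sigma> * v / \<epsilon>\<bar> * real CARD('n)" by (simp add: abs_mult)
    also have "\<dots> \<le> (1 / (8*real CARD('n))) * real CARD('n)" by (rule mult_right_mono[OF sv]) simp
    also have "\<dots> = 1/8" by simp
    finally show ?thesis .
  qed
  define A1 where "A1 = cc + ((2*\<mu>1/\<theta>) / real CARD('n)) *\<^sub>R (ps - cc)"
  define A2 where "A2 = cc + ((2*(\<sigma>/8)/\<theta>) / real CARD('n)) *\<^sub>R (y - cc)"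
  have psD: "ps \<in> Dset" using ps_in by (simp add: ps_def)
  have A1D: "A1 \<in> Dset" unfolding A1_def
  proof (rule D_sym[OF psD])
    have "\<bar>2*\<mu>1/\<theta>\<bar> = 2*\<bar>\<mu>1\<bar>/\<theta>" using th by (simp add: abs_mult abs_div)
    also have "\<dots> \<le> 2*(1/8)/(3/8)" using th m1 by (intro frac_le) auto
    finally show "\<bar>2*\<mu>1/\<theta>\<bar> \<le> 1" by simp
  qed
  have A2D: "A2 \<in> Dset" unfolding A2_def
  proof (rule D_sym[OF y])
    have "\<bar>2*(\<sigma>/8)/\<theta>\<bar> = (1/4)/\<theta>" using th s by (simp add: abs_mult abs_div)
    also have "\<dots> \<le> (1/4)/(3/8)" using th by (intro divide_left_mono) auto
    finally show "\<bar>2*(\<sigma>/8)/\<theta>\<bar> \<le> 1" by simp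
  qed
  define d' where "d' = (1/2) *\<^sub>R A1 + (1/2) *\<^sub>R A2"
  have d'D: "d' \<in> Dset" unfolding d'_def using Dset_convex A1D A2D by (intro convexD) auto
  have thd: "\<theta> *\<^sub>R d' = \<theta> *\<^sub>R cc + (\<theta> - 1/2) *\<^sub>R (ps - cc) + \<sigma> *\<^sub>R w"
  proof -
    have t0: "\<theta> \<noteq> 0" using th by simp
    have n0: "real CARD('n) \<noteq> 0" by simp
    show ?thesis using t0 n0
      by (simp add: d'_def A1_def A2_def w_def \<mu>1_def vec_eq_iff field_simps)
  qed
  define Q where "Q = (1 - \<theta>) *\<^sub>R fst pH + \<theta> *\<^sub>R (d' + (lf d' + \<epsilon>) *\<^sub>R upv i)"
  have QU: "Q \<in> U" unfolding Q_def
    using convex_Kdual[of K i \<epsilon>] p_in(1) Dset_up[OF d'D] th by (intro convexD) auto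
  have ccW: "hor i cc = cc" using Dset_W[OF cc_props(1)] by (simp add: hor_W)
  have d'W: "hor i d' = d'" using Dset_W[OF d'D] by (simp add: hor_W)
  have wW: "hor i w = w" using Dset_W[OF y] Dset_W[OF cc_props(1)] by (simp add: hor_W w_def)
  have pp: "hgt i (fst pH) = lf ps" using p_in(2) by (simp add: ps_def)
  have "hor i Q = (1 - \<theta>) *\<^sub>R ps + \<theta> *\<^sub>R d'" by (simp add: Q_def ps_def d'W)
  also have "\<dots> = (1 - \<theta>) *\<^sub>R ps + (\<theta> *\<^sub>R cc + (\<theta> - 1/2) *\<^sub>R (ps - cc) + \<sigma> *\<^sub>R w)"
    by (simp only: thd)
  also have "\<dots> = (1/2) *\<^sub>R (ps + cc) + \<sigma> *\<^sub>R w" by (simp add: vec_eq_iff algebra_simps)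
  also have "\<dots> = hor i (x0 + \<sigma> *\<^sub>R tau y v)"
  proof -
    have yW: "hor i y = y" using Dset_W[OF y] by (simp add: hor_W)
    show ?thesis
      by (simp add: x0_def tau_def ps_def ccW yW w_def vec_eq_iff field_simps)
  qed
  finally have h1: "hor i Q = hor i (x0 + \<sigma> *\<^sub>R tau y v)" .
  have iq: "hor i q \<bullet> (\<theta> *\<^sub>R d') = \<theta> * (hor i q \<bullet> cc) + (\<theta> - 1/2) * (hor i q \<bullet> ps - hor i q \<bullet> cc) + \<sigma> * (hor i q \<bullet> w)"
    unfolding thd by (simp add: inner_add_right inner_diff_right)
  have hd': "hgt i d' = 0" using hgt_hor[of i d'] d'W by simp
  have "hgt i Q = (1 - \<theta>) * lf ps + \<theta> * (lf d' + \<epsilon>)" by (simp add: Q_def pp hd')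
  also have "\<dots> = (1/2) * (lf ps + lf cc + \<epsilon>) + \<sigma> * (hor i q \<bullet> w + v)"
    using iq e by (simp add: lf_def \<theta>_def algebra_simps)
  also have "\<dots> = hgt i (x0 + \<sigma> *\<^sub>R tau y v)"
  proof -
    have hcc: "hgt i cc = 0" using hgt_hor[of i cc] ccW by simp
    have hy: "hgt i y = 0" using hgt_hor[of i y] Dset_W[OF y] by (simp add: hor_W)
    have tw: "tau y v = w + (hor i q \<bullet> w + v) *\<^sub>R upv i" by (simp add: tau_def w_def)
    have hw: "hgt i w = 0" using hgt_hor[of i w] wW by simp
    show ?thesis by (simp add: tw x0_def pp hcc hw field_simps)
  qed
  finally have h2: "hgt i Q = hgt i (x0 + \<sigma> *\<^sub>R tau y v)" .
  have "Q = x0 + \<sigma> *\<^sub>R tau y v" by (rule hor_hgt_eq[OF h1 h2])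
  then show ?thesis using QU by simp
qed


definition "Tset = {tau y v | y v. y \<in> Dset \<and> v \<in> {-(\<epsilon>/(8*real CARD('n)))..\<epsilon>/(8*real CARD('n))}}"

lemma T_sym: "\<tau> \<in> Tset \<Longrightarrow> x0 + \<tau> \<in> U \<and> x0 - \<tau> \<in> U"
proof -
  assume "\<tau> \<in> Tset"
  then obtain y v where yv0: "y \<in> Dset" "v \<in> {-(\<epsilon>/(8*real CARD('n)))..\<epsilon>/(8*real CARD('n))}" "\<tau> = tau y v"
    by (auto simp: Tset_def)
  then have yv: "y \<in> Dset" "\<bar>v\<bar> \<le> \<epsilon>/(8*real CARD('n))" "\<tau> = tau y v" by auto
  show ?thesis using cone[OF yv(1,2), of 1] cone[OF yv(1,2), of "-1"] yv(3) by simp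
qed

lemma tau0: "tau cc 0 = 0" by (simp add: tau_def)

lemma x0_in: "x0 \<in> U" using cone[OF cc_props(1), of 0 1] e by (simp add: tau0)

lemma x0_hgt: "hgt i x0 = lf (hor i x0) + \<epsilon>/2"
proof -
  have ccW: "hor i cc = cc" using Dset_W[OF cc_props(1)] by (simp add: hor_W)
  have hcc: "hgt i cc = 0" using hgt_hor[of i cc] ccW by simp
  show ?thesis using p_in(2) by (simp add: x0_def lf_def hcc ccW inner_add_right field_simps)
qed

lemma T_compact: "compact Tset"
proof -
  let ?I = "{-(\<epsilon>/(8*real CARD('n)))..\<epsilon>/(8*real CARD('n))}"
  have eq: "Tset = (\<lambda>x. tau (fst x) (snd x)) ` (Dset \<times> ?I)"
  proof (intro set_eqI iffI)
    fix z assume "z \<in> Tset"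
    then obtain y v where "y \<in> Dset" "v \<in> ?I" "z = tau y v" by (auto simp: Tset_def)
    then show "z \<in> (\<lambda>x. tau (fst x) (snd x)) ` (Dset \<times> ?I)" by (intro image_eqI[of _ _ "(y, v)"]) auto
  next
    fix z assume "z \<in> (\<lambda>x. tau (fst x) (snd x)) ` (Dset \<times> ?I)"
    then obtain x where x: "x \<in> Dset \<times> ?I" "z = tau (fst x) (snd x)" by blast
    then have "fst x \<in> Dset" "snd x \<in> ?I" by auto
    then show "z \<in> Tset" unfolding Tset_def using x(2) by blast
  qed
  have c: "continuous_on (Dset \<times> ?I) (\<lambda>x. tau (fst x) (snd x))"
    unfolding tau_def by (intro continuous_intros)
  show ?thesis unfolding eq by (rule compact_continuous_image[OF c compact_Times[OF Dset_compact compact_Icc]])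
qed

lemma tau_alt: "tau y v = (1/(8*real CARD('n))) *\<^sub>R (y - cc) + ((1/(8*real CARD('n))) * (hor i q \<bullet> (y - cc)) + v) *\<^sub>R upv i"
  by (simp add: tau_def)

lemma T_measure: "emeasure lebesgue Tset = ennreal ((1/(8*real CARD('n)))^CARD('n) * (2*\<epsilon>)) * area i Dset"
proof -
  define m where "m = 1/(8*real CARD('n))"
  have m0: "m > 0" by (simp add: m_def)
  define T2 where "T2 = {y + (hor i q \<bullet> (y - cc) + v) *\<^sub>R upv i | y v. y \<in> Dset \<and> v \<in> {-\<epsilon>..\<epsilon>}}"
  have T2m: "emeasure lebesgue T2 = ennreal (2*\<epsilon>) * area i Dset"
    unfolding T2_def
    by (rule prism_upv[OF Dset_compact, of i "\<lambda>y. hor i q \<bullet> (y - cc)" \<epsilon>]) (use Dset_W e in \<open>auto intro!: continuous_intros\<close>)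
  have eq: "Tset = (\<lambda>x. m *\<^sub>R x + (- m *\<^sub>R cc)) ` T2"
  proof (intro set_eqI iffI)
    fix z assume "z \<in> Tset"
    then obtain y v where yv: "y \<in> Dset" "v \<in> {-(\<epsilon>/(8*real CARD('n)))..\<epsilon>/(8*real CARD('n))}" "z = tau y v"
      by (auto simp: Tset_def)
    have vm: "v / m \<in> {-\<epsilon>..\<epsilon>}" using yv(2) m0 by (auto simp: m_def field_simps)
    have "y + (hor i q \<bullet> (y - cc) + v / m) *\<^sub>R upv i \<in> T2"
      using yv(1) vm unfolding T2_def by blast
    moreover have "z = m *\<^sub>R (y + (hor i q \<bullet> (y - cc) + v / m) *\<^sub>R upv i) + (- m *\<^sub>R cc)"
    proof -
      have "z = m *\<^sub>R (y - cc) + (m * (hor i q \<bullet> (y - cc)) + v) *\<^sub>R upv i"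
        unfolding yv(3) tau_alt m_def by simp
      moreover have "m * (v / m) = v" using m0 by simp
      ultimately show ?thesis by (simp add: algebra_simps)
    qed
    ultimately show "z \<in> (\<lambda>x. m *\<^sub>R x + (- m *\<^sub>R cc)) ` T2" by blast
  next
    fix z assume "z \<in> (\<lambda>x. m *\<^sub>R x + (- m *\<^sub>R cc)) ` T2"
    then obtain y v where yv: "y \<in> Dset" "v \<in> {-\<epsilon>..\<epsilon>}" "z = m *\<^sub>R (y + (hor i q \<bullet> (y - cc) + v) *\<^sub>R upv i) + (- m *\<^sub>R cc)"
      by (auto simp: T2_def)
    have "tau y (m * v) = m *\<^sub>R (y - cc) + (m * (hor i q \<bullet> (y - cc)) + m * v) *\<^sub>R upv i"
      unfolding tau_alt m_def by simp
    moreover have "z = m *\<^sub>R (y - cc) + (m * (hor i q \<bullet> (y - cc)) + m * v) *\<^sub>R upv i"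
      using yv(3) by (simp add: algebra_simps)
    ultimately have "z = tau y (m * v)" by simp
    moreover have "m * v \<in> {-(\<epsilon>/(8*real CARD('n)))..\<epsilon>/(8*real CARD('n))}"
      using yv(2) m0 by (auto simp: m_def field_simps)
    ultimately show "z \<in> Tset" using yv(1) by (auto simp: Tset_def)
  qed
  have "emeasure lebesgue Tset = \<bar>m\<bar> ^ DIM(real^'n) * emeasure lebesgue T2"
    unfolding eq by (rule emeasure_lebesgue_affine)
  also have "\<dots> = ennreal (m ^ CARD('n)) * (ennreal (2*\<epsilon>) * area i Dset)"
    using m0 by (simp add: T2m ennreal_power)
  also have "\<dots> = ennreal (m ^ CARD('n) * (2*\<epsilon>)) * area i Dset"
    using m0 e by (simp add: ennreal_mult mult.assoc)
  finally show ?thesis by (simp add: m_def)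
qed

lemma T_pos: "emeasure lebesgue Tset \<noteq> 0"
proof -
  have "(1/(8*real CARD('n)))^CARD('n) * (2*\<epsilon>) > 0" using e by simp
  then show ?thesis unfolding T_measure using area_nz by (simp add: ennreal_eq_0_iff)
qed

lemma T_lower: "emeasure lebesgue Tset \<ge> ennreal ((1/(8*real CARD('n)))^CARD('n) * (2*\<epsilon>) * t)"
proof -
  have "ennreal ((1/(8*real CARD('n)))^CARD('n) * (2*\<epsilon>) * t)
      = ennreal ((1/(8*real CARD('n)))^CARD('n) * (2*\<epsilon>)) * ennreal t"
    using e t by (simp add: ennreal_mult)
  also have "\<dots> \<le> ennreal ((1/(8*real CARD('n)))^CARD('n) * (2*\<epsilon>)) * area i Dset"
    by (rule mult_left_mono[OF large]) simp
  finally show ?thesis unfolding T_measure .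
qed

lemma design_point: "\<exists>yH \<in> ovbd i U. hor i (fst yH) = hor i x0 \<and> hgt i (fst yH) \<le> hgt i x0"
proof -
  have bnd: "\<tau> \<le> \<epsilon>/2" if "\<tau> \<ge> 0" "x0 - \<tau> *\<^sub>R upv i \<in> U" for \<tau>
    using U_above[OF that(2)] x0_hgt by simp
  obtain \<tau> where \<tau>: "\<tau> \<ge> 0" "x0 - \<tau> *\<^sub>R upv i \<in> U" "\<forall>s>0. x0 - (\<tau> + s) *\<^sub>R upv i \<notin> U"
    using lowest_exists[OF closed_Kdual x0_in bnd] by blast
  define w where "w = x0 - \<tau> *\<^sub>R upv i"
  have "\<exists>H. (w, H) \<in> ovbd i U"
  proof (rule ovbd_lowest[OF convex_Kdual])
    show "w \<in> U" using \<tau> by (simp add: w_def)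
    show "w + upv i \<in> U" using Kdual_up[OF \<open>w \<in> U\<close>, of 1] by simp
    show "\<forall>s>0. w - s *\<^sub>R upv i \<notin> U" using \<tau>(3) by (simp add: w_def algebra_simps)
  next
    fix a :: "real^'n" assume a: "a \<noteq> 0" "a \<bullet> upv i = 0"
    show "\<exists>y\<in>U. a \<bullet> y < a \<bullet> w"
    proof (rule ccontr)
      assume "\<not> (\<exists>y\<in>U. a \<bullet> y < a \<bullet> w)"
      then have le: "a \<bullet> w \<le> a \<bullet> y" if "y \<in> U" for y using that by force
      have aw: "a \<bullet> w = a \<bullet> x0" using a(2) by (simp add: w_def inner_diff_right)
      have "Tset \<subseteq> {z. a \<bullet> z = 0}"
      proof
        fix z assume "z \<in> Tset"
        from T_sym[OF this] have "a \<bullet> x0 \<le> a \<bullet> (x0 + z)" "a \<bullet> x0 \<le> a \<bullet> (x0 - z)"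
          using le aw by auto
        then show "z \<in> {z. a \<bullet> z = 0}" by (simp add: inner_add_right inner_diff_right)
      qed
      moreover have "negligible {z::real^'n. a \<bullet> z = 0}" using negligible_hyperplane[of a 0] a by simp
      ultimately have "negligible Tset" using negligible_subset by blast
      then have "emeasure lebesgue Tset = 0"
        unfolding negligible_iff_null_sets by (rule null_setsD1)
      then show False using T_pos by simp
    qed
  qed
  then obtain H where "(w, H) \<in> ovbd i U" by blast
  then show ?thesis using \<tau>(1) by (intro bexI[of _ "(w, H)"]) (auto simp: w_def)
qed

end



lemma sets_lebesgue_compact: "compact S \<Longrightarrow> S \<in> sets lebesgue"
  by (simp add: compact_imp_closed borel_closed)

lemma box_volume:
  fixes j :: "'n::finite" and a b :: real
  assumes "a \<le> b"
  shows "emeasure lebesgue (cbox (\<chi> k. if k = j then a else -3) (\<chi> k. if k = j then b else (3::real)))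
    = ennreal ((b - a) * 6 ^ (CARD('n) - 1))"
proof -
  let ?l = "(\<chi> k. if k = j then a else -3) :: real^'n" and ?u = "(\<chi> k. if k = j then b else 3) :: real^'n"
  have le: "\<forall>bb\<in>Basis. ?l \<bullet> bb \<le> ?u \<bullet> bb" using assms by (auto simp: Basis_vec_real inner_axis)
  have "emeasure lebesgue (cbox ?l ?u) = emeasure lborel (cbox ?l ?u)" by simp
  also have "\<dots> = ennreal (\<Prod>bb\<in>Basis. (?u - ?l) \<bullet> bb)" using le by (simp add: emeasure_lborel_cbox_eq)
  also have "(\<Prod>bb\<in>Basis. (?u - ?l) \<bullet> bb) = (\<Prod>k\<in>UNIV. ?u $ k - ?l $ k)"
    unfolding Basis_vec_real by (subst prod.reindex) (auto simp: inj_on_def axis_eq_axis inner_axis)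
  also have "\<dots> = (?u $ j - ?l $ j) * (\<Prod>k\<in>UNIV - {j}. ?u $ k - ?l $ k)"
    by (rule prod.remove) auto
  also have "(\<Prod>k\<in>UNIV - {j}. ?u $ k - ?l $ k) = (\<Prod>k\<in>UNIV - {j}. 6)"
    by (intro prod.cong) auto
  also have "\<dots> = 6 ^ (CARD('n) - 1)" by (simp add: card_Diff_singleton)
  finally show ?thesis by simp
qed

lemma real_limit_bound:
  fixes X C B :: real
  assumes "\<And>m::nat. m \<ge> 1 \<Longrightarrow> real m * X \<le> B + real m * C"
  shows "X \<le> C"
proof (rule ccontr)
  assume "\<not> X \<le> C"
  then have d: "X - C > 0" by simp
  obtain m :: nat where m: "real m > \<bar>B\<bar> / (X - C)" "m \<ge> 1"
  proof -
    obtain n :: nat where n: "\<bar>B\<bar> / (X - C) < real n" using reals_Archimedean2 by blast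
    show ?thesis using that[of "n + 1"] n by simp
  qed
  have "real m * (X - C) > \<bar>B\<bar>" using m(1) d by (simp add: divide_less_eq mult.commute)
  moreover have "real m * (X - C) \<le> B" using assms[OF m(2)] by (simp add: algebra_simps)
  ultimately show False by linarith
qed

lemma packing:
  fixes R :: "'b \<Rightarrow> (real^'n::finite) set" and U :: "(real^'n) set" and i :: "'n \<times> bool"
  assumes J: "finite J"
    and disj: "\<And>a b. a \<in> J \<Longrightarrow> b \<in> J \<Longrightarrow> a \<noteq> b \<Longrightarrow> R a \<inter> R b = {}"
    and comp: "\<And>a. a \<in> J \<Longrightarrow> compact (R a)"
    and meas: "\<And>a. a \<in> J \<Longrightarrow> ennreal m0 \<le> emeasure lebesgue (R a)"
    and box: "\<And>a z k. a \<in> J \<Longrightarrow> z \<in> R a \<Longrightarrow> k \<noteq> fst i \<Longrightarrow> \<bar>z $ k\<bar> \<le> 3"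
    and inU: "\<And>a. a \<in> J \<Longrightarrow> R a \<subseteq> U"
    and low: "\<And>a z s. a \<in> J \<Longrightarrow> z \<in> R a \<Longrightarrow> s > \<epsilon> \<Longrightarrow> z - s *\<^sub>R upv i \<notin> U"
    and e: "\<epsilon> > 0" and m0: "m0 \<ge> 0"
  shows "real (card J) * m0 \<le> 4 * \<epsilon> * 6 ^ (CARD('n) - 1)"
proof -
  define j where "j = fst i"
  define Z where "Z = (\<Union>a\<in>J. R a)"
  have cZ: "compact Z" unfolding Z_def using J comp by (intro compact_UN) auto
  have ZL: "Z \<in> sets lebesgue" by (rule sets_lebesgue_compact[OF cZ])
  have eZ: "ennreal (real (card J) * m0) \<le> emeasure lebesgue Z"
  proof -
    have "ennreal (real (card J) * m0) = (\<Sum>a\<in>J. ennreal m0)" using m0 by (simp add: ennreal_mult ennreal_of_nat_eq_real_of_nat)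
    also have "\<dots> \<le> (\<Sum>a\<in>J. emeasure lebesgue (R a))" by (intro sum_mono meas)
    also have "\<dots> = emeasure lebesgue Z" unfolding Z_def
      using J comp disj by (intro sum_emeasure) (auto simp: disjoint_family_on_def sets_lebesgue_compact)
    finally show ?thesis .
  qed
  obtain B where B: "\<And>z. z \<in> Z \<Longrightarrow> \<bar>z $ j\<bar> \<le> B" "B \<ge> 0"
  proof -
    obtain B0 where B0: "\<forall>z\<in>Z. norm z \<le> B0" using compact_imp_bounded[OF cZ] unfolding bounded_iff by blast
    have "\<bar>z $ j\<bar> \<le> \<bar>B0\<bar>" if "z \<in> Z" for z
      using B0 that component_le_norm_cart[of z j] abs_ge_self[of B0] by fastforce
    then show ?thesis using that[of "\<bar>B0\<bar>"] by simp
  qed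
  have fin: "emeasure lebesgue Z \<noteq> \<infinity>"
  proof -
    have "emeasure lborel Z < \<infinity>" by (rule emeasure_bounded_finite[OF compact_imp_bounded[OF cZ]])
    moreover have "Z \<in> sets lborel" using cZ by (simp add: compact_imp_closed borel_closed)
    ultimately show ?thesis by simp
  qed
  define V where "V = enn2real (emeasure lebesgue Z)"
  have eV: "emeasure lebesgue Z = ennreal V" using fin by (simp add: V_def ennreal_enn2real_if)
  have V0: "V \<ge> 0" by (simp add: V_def)
  have XV: "real (card J) * m0 \<le> V"
  proof -
    have "(0 \<le> V \<and> real (card J) * m0 \<le> V) \<or> (real (card J) * m0 \<le> 0 \<and> V \<le> 0)"
      using eZ eV by (simp add: ennreal_le_iff2)
    then show ?thesis using V0 by auto
  qed
  have ua: "upv i = (if snd i then -1 else 1) *\<^sub>R axis j 1" by (simp add: upv_eq j_def)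
  have bound: "real m * V \<le> 2 * B * 6 ^ (CARD('n) - 1) + real m * (4 * \<epsilon> * 6 ^ (CARD('n) - 1))"
    if m1: "m \<ge> 1" for m :: nat
  proof -
    define Zk where "Zk k = (\<lambda>z. 1 *\<^sub>R z + (2 * \<epsilon> * real k) *\<^sub>R upv i) ` Z" for k :: nat
    have mk: "emeasure lebesgue (Zk k) = emeasure lebesgue Z" for k
      unfolding Zk_def by (subst emeasure_lebesgue_affine) simp
    have ck: "compact (Zk k)" for k
      unfolding Zk_def by (intro compact_continuous_image cZ continuous_intros)
    have dk: "Zk k \<inter> Zk k' = {}" if "k < k'" for k k'
    proof (rule ccontr)
      assume "Zk k \<inter> Zk k' \<noteq> {}"
      then obtain z1 z2 where z: "z1 \<in> Z" "z2 \<in> Z" "z1 + (2 * \<epsilon> * real k) *\<^sub>R upv i = z2 + (2 * \<epsilon> * real k') *\<^sub>R upv i"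
        by (auto simp: Zk_def)
      obtain a where a: "a \<in> J" "z1 \<in> R a" using z(1) by (auto simp: Z_def)
      obtain b where b: "b \<in> J" "z2 \<in> R b" using z(2) by (auto simp: Z_def)
      have "z1 - (2 * \<epsilon> * (real k' - real k)) *\<^sub>R upv i = z2"
        using z(3) by (simp add: algebra_simps)
      moreover have "z2 \<in> U" using inU[OF b(1)] b(2) by blast
      moreover have "2 * \<epsilon> * (real k' - real k) > \<epsilon>"
      proof -
        have "real k' - real k \<ge> 1" using that by linarith
        then have "2*\<epsilon>*1 \<le> 2*\<epsilon>*(real k' - real k)" using e by (intro mult_left_mono) auto
        then show ?thesis using e by linarith
      qed
      ultimately show False using low[OF a(1) a(2), of "2 * \<epsilon> * (real k' - real k)"] by simp
    qed
    have sub: "Zk k \<subseteq> cbox (\<chi> k. if k = j then -(B + 2*\<epsilon>*real m) else -3) (\<chi> k. if k = j then B + 2*\<epsilon>*real m else (3::real))"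
      if "k < m" for k
    proof
      fix y assume "y \<in> Zk k"
      then obtain z where z: "z \<in> Z" "y = z + (2 * \<epsilon> * real k) *\<^sub>R upv i" by (auto simp: Zk_def)
      obtain a where a: "a \<in> J" "z \<in> R a" using z(1) by (auto simp: Z_def)
      have km: "2 * \<epsilon> * real k \<le> 2 * \<epsilon> * real m" using that e by simp
      have "y $ k' \<in> {(if k' = j then -(B + 2*\<epsilon>*real m) else -3) .. (if k' = j then B + 2*\<epsilon>*real m else 3)}" for k'
      proof (cases "k' = j")
        case True
        have "y $ j = z $ j + (if snd i then -1 else 1) * (2 * \<epsilon> * real k)"
          by (simp add: z(2) ua)
        then have yz: "y $ j - z $ j \<le> 2 * \<epsilon> * real k" "z $ j - y $ j \<le> 2 * \<epsilon> * real k"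
          using e by (cases "snd i"; simp)+
        have bz: "- B \<le> z $ j" "z $ j \<le> B" using B(1)[OF z(1)] by (auto simp: abs_le_iff)
        have "- (B + 2*\<epsilon>*real m) \<le> y $ j \<and> y $ j \<le> B + 2*\<epsilon>*real m"
          using yz bz km by linarith
        then show ?thesis using True by simp
      next
        case False
        have "y $ k' = z $ k'" using False by (simp add: z(2) ua axis_def)
        then show ?thesis using False box[OF a, of k'] by (auto simp: j_def abs_le_iff)
      qed
      then show "y \<in> cbox (\<chi> k. if k = j then -(B + 2*\<epsilon>*real m) else -3) (\<chi> k. if k = j then B + 2*\<epsilon>*real m else (3::real))"
        by (simp add: mem_box_cart)
    qed
    have "ennreal (real m * V) = (\<Sum>k<m. emeasure lebesgue (Zk k))"
      by (simp add: mk eV ennreal_mult' V0 ennreal_of_nat_eq_real_of_nat)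
    also have "\<dots> = emeasure lebesgue (\<Union>k<m. Zk k)"
    proof (rule sum_emeasure)
      show "Zk ` {..<m} \<subseteq> sets lebesgue" using ck by (auto simp: sets_lebesgue_compact)
      show "finite {..<m}" by simp
      show "disjoint_family_on Zk {..<m}"
        unfolding disjoint_family_on_def
      proof (intro ballI impI)
        fix k k' assume "k \<in> {..<m}" "k' \<in> {..<m}" "k \<noteq> k'"
        then show "Zk k \<inter> Zk k' = {}"
          using dk[of k k'] dk[of k' k] by (cases "k < k'") (auto simp: Int_commute)
      qed
    qed
    also have "\<dots> \<le> emeasure lebesgue (cbox (\<chi> k. if k = j then -(B + 2*\<epsilon>*real m) else -3) (\<chi> k. if k = j then B + 2*\<epsilon>*real m else (3::real)))"
      using sub by (intro emeasure_mono) (auto simp: sets_lebesgue_compact)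
    also have "\<dots> = ennreal ((B + 2*\<epsilon>*real m - (-(B + 2*\<epsilon>*real m))) * 6 ^ (CARD('n) - 1))"
      by (rule box_volume) (use B(2) e in simp)
    finally have "ennreal (real m * V) \<le> ennreal ((B + 2*\<epsilon>*real m - (-(B + 2*\<epsilon>*real m))) * 6 ^ (CARD('n) - 1))" .
    moreover have "0 \<le> (B + 2*\<epsilon>*real m - (-(B + 2*\<epsilon>*real m))) * 6 ^ (CARD('n) - 1)"
      using B(2) e by simp
    ultimately have "real m * V \<le> (B + 2*\<epsilon>*real m - (-(B + 2*\<epsilon>*real m))) * 6 ^ (CARD('n) - 1)"
      by (simp only: ennreal_le_iff)
    then show ?thesis by (simp add: algebra_simps)
  qed
  have "V \<le> 4 * \<epsilon> * 6 ^ (CARD('n) - 1)" by (rule real_limit_bound[OF bound])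
  then show ?thesis using XV by linarith
qed


lemma meet:
  fixes U :: "(real^'n::finite) set"
  assumes "convex U" "x + a \<in> U" "x - a \<in> U" "x' + b \<in> U" "x' - b \<in> U"
    and eq: "x + (1/3) *\<^sub>R a = x' + (1/3) *\<^sub>R b"
  shows "2 *\<^sub>R x - x' \<in> U"
proof -
  have x': "x' = x + (1/3) *\<^sub>R a - (1/3) *\<^sub>R b" using eq by (simp add: algebra_simps)
  have "2 *\<^sub>R x - x' = (1/2) *\<^sub>R (x' + b) + (1/2) *\<^sub>R (x - a)"
    unfolding x' by (simp add: vec_eq_iff field_simps)
  also have "\<dots> \<in> U" using assms by (intro convexD) auto
  finally show ?thesis .
qed

context cap_large
begin

lemma below_cap:
  assumes y: "y \<in> U" "2 *\<^sub>R x0 - y \<in> U"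
  shows "hgt i y \<le> lf (hor i y) + \<epsilon>"
proof -
  have "lf (hor i (2 *\<^sub>R x0 - y)) \<le> hgt i (2 *\<^sub>R x0 - y)" by (rule U_above[OF y(2)])
  then show ?thesis using x0_hgt by (simp add: lf_def inner_diff_right algebra_simps)
qed

definition "Rset = (\<lambda>\<tau>. x0 + (1/3) *\<^sub>R \<tau>) ` Tset"

lemma R_U: "z \<in> Rset \<Longrightarrow> z \<in> U \<and> 2 *\<^sub>R x0 - z \<in> U"
proof -
  assume "z \<in> Rset"
  then obtain \<tau> where \<tau>: "\<tau> \<in> Tset" "z = x0 + (1/3) *\<^sub>R \<tau>" by (auto simp: Rset_def)
  have e1: "z = (2/3) *\<^sub>R x0 + (1/3) *\<^sub>R (x0 + \<tau>)" using \<tau>(2) by (simp add: vec_eq_iff field_simps)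
  have m1: "(2/3) *\<^sub>R x0 + (1/3) *\<^sub>R (x0 + \<tau>) \<in> U"
    using T_sym[OF \<tau>(1)] x0_in convex_Kdual[of K i \<epsilon>] by (intro convexD) auto
  have e2: "2 *\<^sub>R x0 - z = (2/3) *\<^sub>R x0 + (1/3) *\<^sub>R (x0 - \<tau>)" using \<tau>(2) by (simp add: vec_eq_iff field_simps)
  have m2: "(2/3) *\<^sub>R x0 + (1/3) *\<^sub>R (x0 - \<tau>) \<in> U"
    using T_sym[OF \<tau>(1)] x0_in convex_Kdual[of K i \<epsilon>] by (intro convexD) auto
  have "z \<in> U" using e1 m1 by simp
  moreover have "2 *\<^sub>R x0 - z \<in> U" using e2 m2 by simp
  ultimately show ?thesis by simp
qed

lemma R_cap: "z \<in> Rset \<Longrightarrow> hgt i z \<le> lf (hor i z) + \<epsilon>"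
  using R_U below_cap by blast

lemma R_box: "z \<in> Rset \<Longrightarrow> k \<noteq> fst i \<Longrightarrow> \<bar>z $ k\<bar> \<le> 3"
  using R_U R_cap box by blast

lemma R_low: "z \<in> Rset \<Longrightarrow> s > \<epsilon> \<Longrightarrow> z - s *\<^sub>R upv i \<notin> U"
proof
  assume z: "z \<in> Rset" and s: "s > \<epsilon>" and zs: "z - s *\<^sub>R upv i \<in> U"
  have "lf (hor i (z - s *\<^sub>R upv i)) \<le> hgt i (z - s *\<^sub>R upv i)" by (rule U_above[OF zs])
  then have "lf (hor i z) \<le> hgt i z - s" by simp
  then show False using R_cap[OF z] s by simp
qed

lemma R_compact: "compact Rset"
  unfolding Rset_def by (intro compact_continuous_image T_compact continuous_intros)

lemma R_meas: "ennreal ((1/3)^CARD('n) * ((1/(8*real CARD('n)))^CARD('n) * (2*\<epsilon>) * t)) \<le> emeasure lebesgue Rset"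
proof -
  define m3 :: real where "m3 = 1/3"
  have eq: "Rset = (\<lambda>x. m3 *\<^sub>R x + x0) ` Tset" by (auto simp: Rset_def add.commute m3_def)
  have "emeasure lebesgue Rset = \<bar>m3\<bar> ^ DIM(real^'n) * emeasure lebesgue Tset"
    unfolding eq by (rule emeasure_lebesgue_affine)
  also have "\<dots> = ennreal ((1/3)^CARD('n)) * emeasure lebesgue Tset"
    by (simp add: ennreal_power m3_def)
  also have "\<dots> \<ge> ennreal ((1/3)^CARD('n)) * ennreal ((1/(8*real CARD('n)))^CARD('n) * (2*\<epsilon>) * t)"
    by (intro mult_left_mono T_lower) simp
  finally show ?thesis using e t by (simp add: ennreal_mult)
qed

lemma cap_package:
  "\<exists>x T yH. (\<forall>\<tau>\<in>T. x + \<tau> \<in> U \<and> x - \<tau> \<in> U) \<and> x \<in> U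
     \<and> (\<forall>y\<in>U. 2 *\<^sub>R x - y \<in> U \<longrightarrow> (\<forall>rG\<in>ovbd i U. hor i (fst rG) = hor i y \<longrightarrow> hgt i (fst rG) \<le> hgt i y \<longrightarrow> rG \<in> Cap i U \<epsilon> pH))
     \<and> yH \<in> ovbd i U \<and> hor i (fst yH) = hor i x \<and> hgt i (fst yH) \<le> hgt i x
     \<and> compact ((\<lambda>\<tau>. x + (1/3) *\<^sub>R \<tau>) ` T)
     \<and> ennreal ((1/3)^CARD('n) * ((1/(8*real CARD('n)))^CARD('n) * (2*\<epsilon>) * t)) \<le> emeasure lebesgue ((\<lambda>\<tau>. x + (1/3) *\<^sub>R \<tau>) ` T)
     \<and> (\<forall>z\<in>(\<lambda>\<tau>. x + (1/3) *\<^sub>R \<tau>) ` T. (\<forall>k. k \<noteq> fst i \<longrightarrow> \<bar>z $ k\<bar> \<le> 3) \<and> (\<forall>s>\<epsilon>. z - s *\<^sub>R upv i \<notin> U) \<and> z \<in> U)"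
proof -
  obtain yH where yH: "yH \<in> ovbd i U" "hor i (fst yH) = hor i x0" "hgt i (fst yH) \<le> hgt i x0"
    using design_point by blast
  have capp: "rG \<in> Cap i U \<epsilon> pH" if "y \<in> U" "2 *\<^sub>R x0 - y \<in> U" "rG \<in> ovbd i U"
    "hor i (fst rG) = hor i y" "hgt i (fst rG) \<le> hgt i y" for y rG
  proof (rule Cap_char[OF that(3)])
    show "hgt i (fst rG) \<le> lf (hor i (fst rG)) + \<epsilon>" using below_cap[OF that(1,2)] that(4,5) by simp
  qed
  show ?thesis
    apply (rule exI[of _ x0], rule exI[of _ Tset], rule exI[of _ yH])
    using T_sym x0_in capp yH R_compact R_meas R_box R_low R_U unfolding Rset_def by blast
qed

end


lemma pkg_exists:
  fixes K :: "(real^'n::finite) set"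
  assumes K: "compact K" "convex K" and e: "\<epsilon> > 0" and t: "t > 0"
    and pH: "pH \<in> ovbd i (Kdual K i \<epsilon>)" and u: "useful K i \<epsilon> pH" and l: "large K i \<epsilon> t pH"
  shows "\<exists>x T yH. (\<forall>\<tau>\<in>T. x + \<tau> \<in> Kdual K i \<epsilon> \<and> x - \<tau> \<in> Kdual K i \<epsilon>) \<and> x \<in> Kdual K i \<epsilon>
     \<and> (\<forall>y\<in>Kdual K i \<epsilon>. 2 *\<^sub>R x - y \<in> Kdual K i \<epsilon> \<longrightarrow> (\<forall>rG\<in>ovbd i (Kdual K i \<epsilon>). hor i (fst rG) = hor i y \<longrightarrow> hgt i (fst rG) \<le> hgt i y \<longrightarrow> rG \<in> Cap i (Kdual K i \<epsilon>) \<epsilon> pH))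
     \<and> yH \<in> ovbd i (Kdual K i \<epsilon>) \<and> hor i (fst yH) = hor i x \<and> hgt i (fst yH) \<le> hgt i x
     \<and> compact ((\<lambda>\<tau>. x + (1/3) *\<^sub>R \<tau>) ` T)
     \<and> ennreal ((1/3)^CARD('n) * ((1/(8*real CARD('n)))^CARD('n) * (2*\<epsilon>) * t)) \<le> emeasure lebesgue ((\<lambda>\<tau>. x + (1/3) *\<^sub>R \<tau>) ` T)
     \<and> (\<forall>z\<in>(\<lambda>\<tau>. x + (1/3) *\<^sub>R \<tau>) ` T. (\<forall>k. k \<noteq> fst i \<longrightarrow> \<bar>z $ k\<bar> \<le> 3) \<and> (\<forall>s>\<epsilon>. z - s *\<^sub>R upv i \<notin> Kdual K i \<epsilon>) \<and> z \<in> Kdual K i \<epsilon>)"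
proof -
  obtain q G where qG: "(q, G) \<in> ovbd i (Kmain K i \<epsilon>)" and sndpH: "snd pH = dualh i q"
    and qlow: "q \<in> lowbd i (Kal K i \<epsilon>)"
    using u unfolding useful_def by blast
  interpret S: cap_setup K \<epsilon> i pH q G
    by unfold_locales (use K e pH qG sndpH qlow in auto)
  interpret L: cap_large K \<epsilon> i pH q G t
    by unfold_locales (use t l in \<open>auto simp: large_def S.Dset_def\<close>)
  show ?thesis by (rule L.cap_package)
qed


theorem lemma13:
  "\<exists>C::real. \<forall>(K::(real^'n::finite) set) (\<epsilon>::real) (i::'n \<times> bool) (t::real).
     compact K \<and> convex K \<and> interior K \<noteq> {} \<and> \<epsilon> > 0 \<and> t > 0 \<longrightarrow>
     (\<exists>P. P \<subseteq> ovbd i (Kdual K i \<epsilon>) \<and> finite P \<and> real (card P) \<le> C / t \<and>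
        (\<forall>pH\<in>ovbd i (Kdual K i \<epsilon>). useful K i \<epsilon> pH \<and> large K i \<epsilon> t pH \<longrightarrow>
            (\<exists>x\<in>P. x \<in> Cap i (Kdual K i \<epsilon>) \<epsilon> pH)))"
proof -
  define c0 :: real where "c0 = (1/3)^CARD('n) * (1/(8*real CARD('n)))^CARD('n) * 2"
  have c0: "c0 > 0" by (simp add: c0_def)
  define C :: real where "C = 4 * 6 ^ (CARD('n) - 1) / c0"
  show ?thesis
  proof (intro exI[of _ C] allI impI)
    fix K :: "(real^'n) set" and \<epsilon> :: real and i :: "'n \<times> bool" and t :: real
    assume asm: "compact K \<and> convex K \<and> interior K \<noteq> {} \<and> \<epsilon> > 0 \<and> t > 0"
    then have K: "compact K" "convex K" and e: "\<epsilon> > 0" and t: "t > 0" by auto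
    define U where "U = Kdual K i \<epsilon>"
    define Cs where "Cs = {pH \<in> ovbd i U. useful K i \<epsilon> pH \<and> large K i \<epsilon> t pH}"
    define m0 where "m0 = (1/3)^CARD('n) * ((1/(8*real CARD('n)))^CARD('n) * (2*\<epsilon>) * t)"
    have m0c: "m0 = c0 * \<epsilon> * t" by (simp add: m0_def c0_def)
    have m0p: "m0 > 0" using c0 e t by (simp add: m0c)
    define Pr where "Pr pH x T yH \<longleftrightarrow> (\<forall>\<tau>\<in>T. x + \<tau> \<in> U \<and> x - \<tau> \<in> U) \<and> x \<in> U
     \<and> (\<forall>y\<in>U. 2 *\<^sub>R x - y \<in> U \<longrightarrow> (\<forall>rG\<in>ovbd i U. hor i (fst rG) = hor i y \<longrightarrow> hgt i (fst rG) \<le> hgt i y \<longrightarrow> rG \<in> Cap i U \<epsilon> pH))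
     \<and> yH \<in> ovbd i U \<and> hor i (fst yH) = hor i x \<and> hgt i (fst yH) \<le> hgt i x
     \<and> compact ((\<lambda>\<tau>. x + (1/3) *\<^sub>R \<tau>) ` T)
     \<and> ennreal m0 \<le> emeasure lebesgue ((\<lambda>\<tau>. x + (1/3) *\<^sub>R \<tau>) ` T)
     \<and> (\<forall>z\<in>(\<lambda>\<tau>. x + (1/3) *\<^sub>R \<tau>) ` T. (\<forall>k. k \<noteq> fst i \<longrightarrow> \<bar>z $ k\<bar> \<le> 3) \<and> (\<forall>s>\<epsilon>. z - s *\<^sub>R upv i \<notin> U) \<and> z \<in> U)"
      for pH x T and yH :: "(real^'n) \<times> (real^'n) set"
    have ex: "\<exists>xTy. Pr pH (fst xTy) (fst (snd xTy)) (snd (snd xTy))" if "pH \<in> Cs" for pH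
    proof -
      from that have "pH \<in> ovbd i (Kdual K i \<epsilon>)" "useful K i \<epsilon> pH" "large K i \<epsilon> t pH"
        by (auto simp: Cs_def U_def)
      from pkg_exists[OF K e t this] obtain x T yH where "Pr pH x T yH"
        unfolding Pr_def U_def m0_def by blast
      then show ?thesis by (intro exI[of _ "(x, T, yH)"]) simp
    qed
    define F where "F pH = (SOME xTy. Pr pH (fst xTy) (fst (snd xTy)) (snd (snd xTy)))" for pH
    define X where "X pH = fst (F pH)" for pH
    define TT where "TT pH = fst (snd (F pH))" for pH
    define Y where "Y pH = snd (snd (F pH))" for pH
    have PrF: "Pr pH (X pH) (TT pH) (Y pH)" if "pH \<in> Cs" for pH
      unfolding X_def TT_def Y_def F_def using someI_ex[OF ex[OF that]] .
    define R where "R pH = (\<lambda>\<tau>. X pH + (1/3) *\<^sub>R \<tau>) ` TT pH" for pH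
    define Fam where "Fam J \<longleftrightarrow> J \<subseteq> Cs \<and> finite J \<and> (\<forall>a\<in>J. \<forall>b\<in>J. a \<noteq> b \<longrightarrow> R a \<inter> R b = {})" for J
    have famb: "real (card J) \<le> C / t" if "Fam J" for J
    proof -
      have J: "J \<subseteq> Cs" "finite J" "\<And>a b. a \<in> J \<Longrightarrow> b \<in> J \<Longrightarrow> a \<noteq> b \<Longrightarrow> R a \<inter> R b = {}"
        using that by (auto simp: Fam_def)
      have P: "Pr a (X a) (TT a) (Y a)" if "a \<in> J" for a using PrF J(1) that by blast
      have "real (card J) * m0 \<le> 4 * \<epsilon> * 6 ^ (CARD('n) - 1)"
      proof (rule packing[of J R m0 i U \<epsilon>])
        show "finite J" by fact
        show "\<And>a b. a \<in> J \<Longrightarrow> b \<in> J \<Longrightarrow> a \<noteq> b \<Longrightarrow> R a \<inter> R b = {}" by fact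
        show "\<And>a. a \<in> J \<Longrightarrow> compact (R a)" using P by (simp add: Pr_def R_def)
        show "\<And>a. a \<in> J \<Longrightarrow> ennreal m0 \<le> emeasure lebesgue (R a)" using P by (simp add: Pr_def R_def)
        show "\<And>a z k. a \<in> J \<Longrightarrow> z \<in> R a \<Longrightarrow> k \<noteq> fst i \<Longrightarrow> \<bar>z $ k\<bar> \<le> 3"
          using P unfolding Pr_def R_def by blast
        show "\<And>a. a \<in> J \<Longrightarrow> R a \<subseteq> U" using P unfolding Pr_def R_def by blast
        show "\<And>a z s. a \<in> J \<Longrightarrow> z \<in> R a \<Longrightarrow> \<epsilon> < s \<Longrightarrow> z - s *\<^sub>R upv i \<notin> U"
          using P unfolding Pr_def R_def by blast
        show "\<epsilon> > 0" by fact
        show "m0 \<ge> 0" using m0p by simp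
      qed
      then have "real (card J) * (c0 * \<epsilon> * t) \<le> (4 * 6 ^ (CARD('n) - 1)) * \<epsilon>"
        by (simp add: m0c algebra_simps)
      then have "real (card J) * (c0 * t) \<le> 4 * 6 ^ (CARD('n) - 1)"
        using e by (simp add: algebra_simps)
      then show ?thesis using c0 t by (simp add: C_def field_simps)
    qed
    have famN: "card J \<le> nat \<lfloor>C / t\<rfloor>" if "Fam J" for J
      using famb[OF that] by linarith
    obtain n where n: "\<exists>J. Fam J \<and> card J = n" "\<forall>m. (\<exists>J. Fam J \<and> card J = m) \<longrightarrow> m \<le> n"
    proof -
      have "Fam {}" by (simp add: Fam_def)
      then have "\<exists>J. Fam J \<and> card J = 0" by (intro exI[of _ "{}"]) simp
      moreover have "\<forall>m. (\<exists>J. Fam J \<and> card J = m) \<longrightarrow> m \<le> nat \<lfloor>C / t\<rfloor>" using famN by blast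
      ultimately show ?thesis using that Nat.ex_has_greatest_nat[of "\<lambda>m. \<exists>J. Fam J \<and> card J = m" 0 "nat \<lfloor>C / t\<rfloor>"] by blast
    qed
    obtain J where J: "Fam J" "card J = n" using n(1) by blast
    have Jmax: "\<not> Fam J'" if "card J' > card J" for J' using n(2) J(2) that by fastforce
    have JC: "J \<subseteq> Cs" "finite J" using J(1) by (auto simp: Fam_def)
    define P where "P = Y ` J"
    show "\<exists>P. P \<subseteq> ovbd i (Kdual K i \<epsilon>) \<and> finite P \<and> real (card P) \<le> C / t \<and>
        (\<forall>pH\<in>ovbd i (Kdual K i \<epsilon>). useful K i \<epsilon> pH \<and> large K i \<epsilon> t pH \<longrightarrow>
            (\<exists>x\<in>P. x \<in> Cap i (Kdual K i \<epsilon>) \<epsilon> pH))"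
    proof (intro exI[of _ P] conjI ballI impI)
      show "P \<subseteq> ovbd i (Kdual K i \<epsilon>)"
        using PrF JC(1) by (auto simp: P_def Pr_def U_def)
      show "finite P" using JC(2) by (simp add: P_def)
      have "card P \<le> card J" unfolding P_def by (rule card_image_le[OF JC(2)])
      then show "real (card P) \<le> C / t" using famb[OF J(1)] by linarith
    next
      fix pH assume pH: "pH \<in> ovbd i (Kdual K i \<epsilon>)" and ul: "useful K i \<epsilon> pH \<and> large K i \<epsilon> t pH"
      have pC: "pH \<in> Cs" using pH ul by (simp add: Cs_def U_def)
      have Pa: "Pr pH (X pH) (TT pH) (Y pH)" by (rule PrF[OF pC])
      have Rne: "R pH \<noteq> {}"
      proof
        assume "R pH = {}"
        then have "emeasure lebesgue (R pH) = 0" by simp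
        moreover have "ennreal m0 \<le> emeasure lebesgue (R pH)" using Pa by (simp add: Pr_def R_def)
        ultimately show False using m0p by simp
      qed
      have "\<exists>b\<in>J. R pH \<inter> R b \<noteq> {}"
      proof (rule ccontr)
        assume no: "\<not> (\<exists>b\<in>J. R pH \<inter> R b \<noteq> {})"
        show False
        proof (cases "pH \<in> J")
          case True then show False using no Rne by auto
        next
          case False
          have "Fam (insert pH J)"
            using J(1) pC no unfolding Fam_def by (auto simp: Int_commute)
          moreover have "card (insert pH J) > card J" using False JC(2) by simp
          ultimately show False using Jmax by blast
        qed
      qed
      then obtain b z where b: "b \<in> J" "z \<in> R pH" "z \<in> R b" by blast
      have bC: "b \<in> Cs" using b(1) JC(1) by blast
      have Pb: "Pr b (X b) (TT b) (Y b)" by (rule PrF[OF bC])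
      obtain \<tau>a where \<tau>a: "\<tau>a \<in> TT pH" "z = X pH + (1/3) *\<^sub>R \<tau>a" using b(2) by (auto simp: R_def)
      obtain \<tau>b where \<tau>b: "\<tau>b \<in> TT b" "z = X b + (1/3) *\<^sub>R \<tau>b" using b(3) by (auto simp: R_def)
      have cU: "convex U" unfolding U_def by (rule convex_Kdual)
      have m: "2 *\<^sub>R X pH - X b \<in> U"
        by (rule meet[OF cU]) (use Pa Pb \<tau>a \<tau>b in \<open>auto simp: Pr_def\<close>)
      have XbU: "X b \<in> U" using Pb by (simp add: Pr_def)
      have "Y b \<in> Cap i U \<epsilon> pH"
        using Pa Pb XbU m unfolding Pr_def by blast
      moreover have "Y b \<in> P" using b(1) by (simp add: P_def)
      ultimately show "\<exists>x\<in>P. x \<in> Cap i (Kdual K i \<epsilon>) \<epsilon> pH" unfolding U_def by blast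
    qed
  qed
qed

end
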